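(* Let $A\in\mathbb{R}^{m\times n}$, $d\ge n$, let $\{u_\ell\}_{\ell\in[L]}$ be a projective $2$-design for $\mathbb{R}^d$, let $\Pi:\mathbb{R}^d\to\mathbb{R}^n$ be the projection onto the first $n$ coordinates, and let $z$ be uniformly distributed over $\{\sqrt d\,\Pi u_\ell:\ell\in[L]\}$. Let $x\in\mathbb{R}^n$ be a unit vector and $y:=Azz^\top x$. Let $\gamma>0$ and $\eta\in(0,1)$, and choose positive integers $$J\ge\frac{4e^2\|A\|_{2\to\infty}^2}{\gamma^2},\qquad K\ge 2\log\Big(\frac m\eta\Big).$$ Let $\{y_{jk}\}_{j\in[J],k\in[K]}$ be independent copies of $y$, set $\overline y_k:=\frac1J\sum_{j\in[J]}y_{jk}$, and let $\hat\mu\in\mathbb{R}^m$ be the entrywise median of $\{\overline y_k\}_{k\in[K]}$, i.e. $\hat\mu_i=\operatorname{median}\{(\overline y_k)_i\}_{k\in[K]}$. Then $\|\hat\mu-Ax\|_\infty<\gamma$ with probability at least $1-\eta$.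
   Context: $\|A\|_{2\to\infty}$ denotes the largest Euclidean norm of a row of $A$; $\log$ is the natural logarithm. The median of $K$ reals is the middle order statistic (for even $K$, the average of the two middle order statistics). A projective $2$-design for $\mathbb{R}^d$ is a finite family $\{u_\ell\}_{\ell\in[L]}$ of unit vectors with $\frac1L\sum_\ell p(u_\ell)=\int_{S^{d-1}}p\,d\sigma$ for every homogeneous polynomial $p$ of degree $0$, $2$ or $4$ in $d$ real variables, where $\sigma$ is the uniform probability measure on $S^{d-1}$. *)

theory Defs
  imports "HOL-Analysis.Analysis" "HOL-Probability.Probability"
begin

text \<open>Vectors in R^k are modelled as functions nat => real, only indices < k matter.
  Matrices in R^(m x n) are functions nat => nat => real (row, column).\<close>

definition sqnorm :: "nat \<Rightarrow> (nat \<Rightarrow> real) \<Rightarrow> real" where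
  "sqnorm k x = (\<Sum>i<k. (x i)\<^sup>2)"

definition norm_2_inf :: "nat \<Rightarrow> nat \<Rightarrow> (nat \<Rightarrow> nat \<Rightarrow> real) \<Rightarrow> real" where
  "norm_2_inf m n A = Max (insert 0 ((\<lambda>i. sqrt (\<Sum>j<n. (A i j)\<^sup>2)) ` {..<m}))"

abbreviation lebesgue_d :: "nat \<Rightarrow> (nat \<Rightarrow> real) measure" where
  "lebesgue_d d \<equiv> Pi\<^sub>M {..<d} (\<lambda>_. lborel)"

definition unit_ball_d :: "nat \<Rightarrow> (nat \<Rightarrow> real) set" where
  "unit_ball_d d = {x \<in> space (lebesgue_d d). sqnorm d x \<le> 1}"

text \<open>Uniform probability measure sigma on S^(d-1): the image of the uniform
  distribution on the unit ball under radial projection x |-> x/|x|.\<close>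
definition sphere_measure :: "nat \<Rightarrow> (nat \<Rightarrow> real) measure" where
  "sphere_measure d =
     distr (uniform_measure (lebesgue_d d) (unit_ball_d d)) (lebesgue_d d)
       (\<lambda>x. restrict (\<lambda>i. x i / sqrt (sqnorm d x)) {..<d})"

text \<open>A homogeneous polynomial in d variables with monomial exponents in S
  (all of total degree k) and coefficients c.\<close>
definition poly_eval :: "nat \<Rightarrow> (nat \<Rightarrow> nat) set \<Rightarrow> ((nat \<Rightarrow> nat) \<Rightarrow> real) \<Rightarrow> (nat \<Rightarrow> real) \<Rightarrow> real" where
  "poly_eval d S c x = (\<Sum>\<alpha>\<in>S. c \<alpha> * (\<Prod>i<d. x i ^ \<alpha> i))"

definition homogeneous_exps :: "nat \<Rightarrow> nat \<Rightarrow> (nat \<Rightarrow> nat) set \<Rightarrow> bool" where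
  "homogeneous_exps d k S \<longleftrightarrow> finite S \<and> (\<forall>\<alpha>\<in>S. (\<Sum>i<d. \<alpha> i) = k \<and> (\<forall>i\<ge>d. \<alpha> i = 0))"

definition projective_2_design :: "nat \<Rightarrow> nat \<Rightarrow> (nat \<Rightarrow> nat \<Rightarrow> real) \<Rightarrow> bool" where
  "projective_2_design d L u \<longleftrightarrow>
     L > 0 \<and> (\<forall>l<L. sqnorm d (u l) = 1) \<and>
     (\<forall>k\<in>{0,2,4}. \<forall>S c. homogeneous_exps d k S \<longrightarrow>
        (1 / real L) * (\<Sum>l<L. poly_eval d S c (u l))
          = integral\<^sup>L (sphere_measure d) (poly_eval d S c))"

definition median :: "nat \<Rightarrow> (nat \<Rightarrow> real) \<Rightarrow> real" where
  "median K f = (let xs = sort (map f [0..<K]) in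
     if odd K then xs ! (K div 2) else (xs ! (K div 2 - 1) + xs ! (K div 2)) / 2)"

text \<open>z = sqrt d * Pi u_l (first n coordinates), and y = A z z^T x, for design index l.\<close>
definition z_vec :: "nat \<Rightarrow> nat \<Rightarrow> (nat \<Rightarrow> nat \<Rightarrow> real) \<Rightarrow> nat \<Rightarrow> nat \<Rightarrow> real" where
  "z_vec n d u l = (\<lambda>j. if j < n then sqrt (real d) * u l j else 0)"

definition y_vec :: "nat \<Rightarrow> nat \<Rightarrow> (nat \<Rightarrow> nat \<Rightarrow> real) \<Rightarrow> (nat \<Rightarrow> nat \<Rightarrow> real) \<Rightarrow> (nat \<Rightarrow> real) \<Rightarrow> nat \<Rightarrow> nat \<Rightarrow> real" where
  "y_vec n d A u x l = (\<lambda>i. (\<Sum>j<n. A i j * z_vec n d u l j) * (\<Sum>j<n. z_vec n d u l j * x j))"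

end

theory Submission
  imports Defs
begin


lemma leb_shear_nn:
  assumes ad: "a < d" and bd: "b < d" and ab: "a \<noteq> b" and s: "s = 1 \<or> s = -1"
    and f[measurable]: "f \<in> borel_measurable (lebesgue_d d)"
  shows "(\<integral>\<^sup>+x. f (x(a := s * x a + c * x b)) \<partial>lebesgue_d d) = (\<integral>\<^sup>+x. f x \<partial>lebesgue_d d)"
proof -
  interpret product_sigma_finite "\<lambda>_. lborel :: real measure" by standard
  define I where "I = {..<d} - {a}"
  have dI: "{..<d} = insert a I" and fI: "finite I" and aI: "a \<notin> I" and bI: "b \<in> I"
    using ad bd ab by (auto simp: I_def)
  have fm: "f \<in> borel_measurable (Pi\<^sub>M (insert a I) (\<lambda>_. lborel))" using f dI by simp
  have Em: "(\<lambda>x. x(a := s * x a + c * x b)) \<in> measurable (Pi\<^sub>M (insert a I) (\<lambda>_. lborel)) (Pi\<^sub>M (insert a I) (\<lambda>_. lborel))"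
  proof -
    have "(\<lambda>x i. (if i = a then s * x a + c * x b else x i)) \<in> measurable (Pi\<^sub>M (insert a I) (\<lambda>_. lborel)) (Pi\<^sub>M (insert a I) (\<lambda>_. lborel))"
      by (rule measurable_PiM_single') (use bI in \<open>auto simp: space_PiM PiE_def extensional_def\<close>)
    moreover have "(\<lambda>x i. (if i = a then s * x a + c * x b else x i)) = (\<lambda>x. x(a := s * x a + c * x b))"
      by (auto simp: fun_eq_iff)
    ultimately show ?thesis by simp
  qed
  have "(\<integral>\<^sup>+x. f (x(a := s * x a + c * x b)) \<partial>lebesgue_d d)
     = (\<integral>\<^sup>+x. (\<integral>\<^sup>+y. f ((x(a := y))(a := s * (x(a := y)) a + c * (x(a := y)) b)) \<partial>lborel) \<partial>(Pi\<^sub>M I (\<lambda>_. lborel)))"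
    unfolding dI using fI aI Em fm by (subst product_nn_integral_insert) (auto intro: measurable_compose)
  also have "\<dots> = (\<integral>\<^sup>+x. (\<integral>\<^sup>+y. f (x(a := y)) \<partial>lborel) \<partial>(Pi\<^sub>M I (\<lambda>_. lborel)))"
  proof (rule nn_integral_cong)
    fix x assume x: "x \<in> space (Pi\<^sub>M I (\<lambda>_. lborel :: real measure))"
    have gm: "(\<lambda>y. f (x(a := y))) \<in> borel_measurable borel"
      using x fm by measurable
    have "(\<integral>\<^sup>+y. f ((x(a := y))(a := s * (x(a := y)) a + c * (x(a := y)) b)) \<partial>lborel)
        = (\<integral>\<^sup>+y. f (x(a := c * x b + s * y)) \<partial>lborel)"
      using ab by (simp add: add.commute)
    also have "\<dots> = (\<integral>\<^sup>+y. f (x(a := y)) \<partial>lborel)"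
      using nn_integral_real_affine[OF gm, of s "c * x b"] s by auto
    finally show "(\<integral>\<^sup>+y. f ((x(a := y))(a := s * (x(a := y)) a + c * (x(a := y)) b)) \<partial>lborel)
        = (\<integral>\<^sup>+y. f (x(a := y)) \<partial>lborel)" .
  qed
  also have "\<dots> = (\<integral>\<^sup>+x. f x \<partial>lebesgue_d d)"
    unfolding dI using fI aI fm by (subst product_nn_integral_insert) auto
  finally show ?thesis .
qed

lemma distr_inv_from_nn:
  assumes T[measurable]: "T \<in> measurable M M"
    and nn: "\<And>f. f \<in> borel_measurable M \<Longrightarrow> (\<integral>\<^sup>+x. f (T x) \<partial>M) = (\<integral>\<^sup>+x. f x \<partial>M)"
  shows "distr M M T = M"
proof (rule measure_eqI)
  show "sets (distr M M T) = sets M" by simp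
  fix A assume A: "A \<in> sets (distr M M T)"
  hence A': "A \<in> sets M" by simp
  have "emeasure (distr M M T) A = emeasure M (T -` A \<inter> space M)"
    using A' by (simp add: emeasure_distr)
  also have "\<dots> = (\<integral>\<^sup>+x. indicator (T -` A \<inter> space M) x \<partial>M)"
    using A' T by (subst nn_integral_indicator) (auto simp: measurable_sets)
  also have "\<dots> = (\<integral>\<^sup>+x. indicator A (T x) \<partial>M)"
    by (rule nn_integral_cong) (auto simp: indicator_def)
  also have "\<dots> = (\<integral>\<^sup>+x. indicator A x \<partial>M)"
    using A' by (intro nn) auto
  also have "\<dots> = emeasure M A" using A' by simp
  finally show "emeasure (distr M M T) A = emeasure M A" .
qed

lemma upd_measurable:
  assumes "a < d" "b < d"
  shows "(\<lambda>x. x(a := s * x a + c * x b)) \<in> measurable (lebesgue_d d) (lebesgue_d d)"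
proof -
  have "(\<lambda>x i. (if i = a then s * x a + c * x b else x i)) \<in> measurable (lebesgue_d d) (lebesgue_d d)"
    by (rule measurable_PiM_single') (use assms in \<open>auto simp: space_PiM PiE_def extensional_def\<close>)
  moreover have "(\<lambda>x i. (if i = a then s * x a + c * x b else x i)) = (\<lambda>x. x(a := s * x a + c * x b))"
    by (auto simp: fun_eq_iff)
  ultimately show ?thesis by simp
qed

lemma leb_shear:
  assumes ad: "a < d" and bd: "b < d" and ab: "a \<noteq> b" and s: "s = 1 \<or> s = -1"
  shows "distr (lebesgue_d d) (lebesgue_d d) (\<lambda>x. x(a := s * x a + c * x b)) = lebesgue_d d"
  by (rule distr_inv_from_nn[OF upd_measurable[OF ad bd] leb_shear_nn[OF assms]])

definition rot :: "nat \<Rightarrow> nat \<Rightarrow> real \<Rightarrow> real \<Rightarrow> (nat \<Rightarrow> real) \<Rightarrow> (nat \<Rightarrow> real)" where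
  "rot a b c s x = x(a := c * x a - s * x b, b := s * x a + c * x b)"

lemma distr_comp_inv:
  assumes f: "f \<in> measurable M M" and g: "g \<in> measurable M M"
    and "distr M M f = M" "distr M M g = M"
  shows "distr M M (g \<circ> f) = M"
  using distr_distr[OF g f] assms by simp

lemma rot_shears:
  assumes ab: "a \<noteq> b" and cs: "c\<^sup>2 + s\<^sup>2 = 1" and c: "c \<noteq> -1"
  defines "t \<equiv> - s / (1 + c)"
  shows "rot a b c s = (\<lambda>x. x(a := 1 * x a + t * x b)) \<circ> (\<lambda>x. x(b := 1 * x b + s * x a)) \<circ> (\<lambda>x. x(a := 1 * x a + t * x b))"
proof -
  have c1: "1 + c \<noteq> 0" using c by auto
  have e1: "1 + s * t = c"
    using c1 cs unfolding t_def by (simp add: field_simps power2_eq_square)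
  have e2: "t + t + s * (t * t) = - s"
  proof -
    have "t + t + s * (t * t) = t * (1 + (1 + s * t))" by (simp add: algebra_simps)
    also have "\<dots> = t * (1 + c)" using e1 by simp
    also have "\<dots> = - s" using c1 unfolding t_def by simp
    finally show ?thesis .
  qed
  show ?thesis
  proof (rule ext)
    fix x
    have "x a + t * x b + t * (x b + s * (x a + t * x b)) = (1 + s * t) * x a + (t + t + s * (t * t)) * x b"
      by (simp add: algebra_simps)
    also have "\<dots> = c * x a - s * x b" using e1 e2 by simp
    finally have h1: "x a + t * x b + t * (x b + s * (x a + t * x b)) = c * x a - s * x b" .
    have h2: "x b + s * (x a + t * x b) = s * x a + c * x b"
      using e1 by (simp add: algebra_simps) (metis add.commute distrib_left mult.commute mult.left_commute mult_1)
    show "rot a b c s x = ((\<lambda>x. x(a := 1 * x a + t * x b)) \<circ> (\<lambda>x. x(b := 1 * x b + s * x a)) \<circ> (\<lambda>x. x(a := 1 * x a + t * x b))) x"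
      using ab h1 h2 by (auto simp: rot_def fun_eq_iff)
  qed
qed

lemma rot_measurable_aux:
  assumes "a < d" "b < d" "a \<noteq> b" "c\<^sup>2 + s\<^sup>2 = 1" "c \<noteq> -1"
  shows "rot a b c s \<in> measurable (lebesgue_d d) (lebesgue_d d) \<and> distr (lebesgue_d d) (lebesgue_d d) (rot a b c s) = lebesgue_d d"
proof -
  define t where "t = - s / (1 + c)"
  define f where "f = (\<lambda>x::nat\<Rightarrow>real. x(a := 1 * x a + t * x b))"
  define g where "g = (\<lambda>x::nat\<Rightarrow>real. x(b := 1 * x b + s * x a))"
  have r: "rot a b c s = f \<circ> g \<circ> f" unfolding f_def g_def t_def by (rule rot_shears[OF assms(3-5)])
  have fm: "f \<in> measurable (lebesgue_d d) (lebesgue_d d)" unfolding f_def by (rule upd_measurable) (use assms in auto)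
  have gm: "g \<in> measurable (lebesgue_d d) (lebesgue_d d)" unfolding g_def by (rule upd_measurable) (use assms in auto)
  have fd: "distr (lebesgue_d d) (lebesgue_d d) f = lebesgue_d d" unfolding f_def by (rule leb_shear) (use assms in auto)
  have gd: "distr (lebesgue_d d) (lebesgue_d d) g = lebesgue_d d" unfolding g_def by (rule leb_shear) (use assms in auto)
  have m1: "g \<circ> f \<in> measurable (lebesgue_d d) (lebesgue_d d)" by (rule measurable_comp[OF fm gm])
  have d1: "distr (lebesgue_d d) (lebesgue_d d) (g \<circ> f) = lebesgue_d d" by (rule distr_comp_inv[OF fm gm fd gd])
  have m2: "f \<circ> (g \<circ> f) \<in> measurable (lebesgue_d d) (lebesgue_d d)" by (rule measurable_comp[OF m1 fm])
  have d2: "distr (lebesgue_d d) (lebesgue_d d) (f \<circ> (g \<circ> f)) = lebesgue_d d" by (rule distr_comp_inv[OF m1 fm d1 fd])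
  show ?thesis using m2 d2 r by (simp add: comp_assoc)
qed

lemma rot_measurable:
  assumes "a < d" "b < d" "a \<noteq> b" "c\<^sup>2 + s\<^sup>2 = 1" "c \<noteq> -1"
  shows "rot a b c s \<in> measurable (lebesgue_d d) (lebesgue_d d)"
  using rot_measurable_aux[OF assms] by blast

lemma leb_rot:
  assumes "a < d" "b < d" "a \<noteq> b" "c\<^sup>2 + s\<^sup>2 = 1" "c \<noteq> -1"
  shows "distr (lebesgue_d d) (lebesgue_d d) (rot a b c s) = lebesgue_d d"
  using rot_measurable_aux[OF assms] by blast

definition Nrm :: "nat \<Rightarrow> (nat \<Rightarrow> real) \<Rightarrow> (nat \<Rightarrow> real)" where
  "Nrm d x = restrict (\<lambda>i. x i / sqrt (sqnorm d x)) {..<d}"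

lemma sqnorm_measurable[measurable]: "sqnorm d \<in> borel_measurable (lebesgue_d d)"
  unfolding sqnorm_def by measurable

lemma ball_sets[measurable]: "unit_ball_d d \<in> sets (lebesgue_d d)"
  unfolding unit_ball_d_def by measurable

lemma Nrm_measurable[measurable]: "Nrm d \<in> measurable (lebesgue_d d) (lebesgue_d d)"
  unfolding Nrm_def by measurable

lemma sphere_measure_Nrm: "sphere_measure d = distr (uniform_measure (lebesgue_d d) (unit_ball_d d)) (lebesgue_d d) (Nrm d)"
  unfolding sphere_measure_def Nrm_def ..

lemma sphere_inv:
  assumes Tm[measurable]: "T \<in> measurable (lebesgue_d d) (lebesgue_d d)"
    and Td: "distr (lebesgue_d d) (lebesgue_d d) T = lebesgue_d d"
    and Tn: "\<And>x. x \<in> space (lebesgue_d d) \<Longrightarrow> sqnorm d (T x) = sqnorm d x"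
    and TN: "\<And>x. x \<in> space (lebesgue_d d) \<Longrightarrow> T (Nrm d x) = Nrm d (T x)"
  shows "distr (sphere_measure d) (lebesgue_d d) T = sphere_measure d"
proof -
  let ?L = "lebesgue_d d"
  let ?U = "uniform_measure ?L (unit_ball_d d)"
  have sU: "sets ?U = sets ?L" by simp
  have spU: "space ?U = space ?L" by simp
  have TmU: "T \<in> measurable ?U ?L" using Tm by (simp add: measurable_cong_sets[OF sU refl])
  have NmU: "Nrm d \<in> measurable ?U ?L" by (simp add: measurable_cong_sets[OF sU refl])
  have UT: "distr ?U ?L T = ?U"
  proof (rule measure_eqI)
    show "sets (distr ?U ?L T) = sets ?U" by simp
    fix A assume A: "A \<in> sets (distr ?U ?L T)"
    hence A': "A \<in> sets ?L" by simp
    have pre: "T -` A \<inter> space ?L \<in> sets ?L" using A' Tm by (rule measurable_sets[rotated])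
    have eq: "unit_ball_d d \<inter> (T -` A \<inter> space ?L) = T -` (unit_ball_d d \<inter> A) \<inter> space ?L"
    proof -
      have "x \<in> unit_ball_d d \<longleftrightarrow> T x \<in> unit_ball_d d" if "x \<in> space ?L" for x
        using that Tn[OF that] measurable_space[OF Tm that] by (auto simp: unit_ball_d_def)
      thus ?thesis by auto
    qed
    have "emeasure (distr ?U ?L T) A = emeasure ?U (T -` A \<inter> space ?L)"
      using A' TmU by (simp add: emeasure_distr)
    also have "\<dots> = emeasure ?L (unit_ball_d d \<inter> (T -` A \<inter> space ?L)) / emeasure ?L (unit_ball_d d)"
      using pre by (simp add: emeasure_uniform_measure)
    also have "emeasure ?L (unit_ball_d d \<inter> (T -` A \<inter> space ?L)) = emeasure (distr ?L ?L T) (unit_ball_d d \<inter> A)"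
      unfolding eq using A' by (simp add: emeasure_distr)
    also have "\<dots> = emeasure ?L (unit_ball_d d \<inter> A)" by (simp add: Td)
    also have "emeasure ?L (unit_ball_d d \<inter> A) / emeasure ?L (unit_ball_d d) = emeasure ?U A"
      using A' by (simp add: emeasure_uniform_measure)
    finally show "emeasure (distr ?U ?L T) A = emeasure ?U A" .
  qed
  have "distr (sphere_measure d) ?L T = distr (distr ?U ?L (Nrm d)) ?L T"
    by (simp add: sphere_measure_Nrm)
  also have "\<dots> = distr ?U ?L (T \<circ> Nrm d)"
    by (rule distr_distr[OF Tm NmU])
  also have "\<dots> = distr ?U ?L (Nrm d \<circ> T)"
    by (rule distr_cong) (auto simp: TN spU)
  also have "\<dots> = distr (distr ?U ?L T) ?L (Nrm d)"
    by (rule distr_distr[symmetric]) (auto intro: TmU)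
  also have "\<dots> = sphere_measure d" by (simp add: UT sphere_measure_Nrm)
  finally show ?thesis .
qed

lemma sqnorm_upd:
  assumes "a < d"
  shows "sqnorm d (x(a := p)) = sqnorm d x - (x a)\<^sup>2 + p\<^sup>2"
proof -
  have "sqnorm d (x(a := p)) = p\<^sup>2 + (\<Sum>i\<in>{..<d} - {a}. (x i)\<^sup>2)"
    unfolding sqnorm_def using assms by (subst sum.remove[of _ a]) (auto intro!: sum.cong)
  moreover have "sqnorm d x = (x a)\<^sup>2 + (\<Sum>i\<in>{..<d} - {a}. (x i)\<^sup>2)"
    unfolding sqnorm_def using assms by (subst sum.remove[of _ a]) auto
  ultimately show ?thesis by simp
qed

lemma sqnorm_rot:
  assumes "a < d" "b < d" "a \<noteq> b" "c\<^sup>2 + s\<^sup>2 = 1"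
  shows "sqnorm d (rot a b c s x) = sqnorm d x"
proof -
  have "sqnorm d (rot a b c s x) = sqnorm d x - (x a)\<^sup>2 + (c * x a - s * x b)\<^sup>2 - (x b)\<^sup>2 + (s * x a + c * x b)\<^sup>2"
    unfolding rot_def using assms by (simp add: sqnorm_upd)
  also have "\<dots> = sqnorm d x + (c\<^sup>2 + s\<^sup>2 - 1) * ((x a)\<^sup>2 + (x b)\<^sup>2)"
    by (simp add: power2_eq_square algebra_simps)
  finally show ?thesis using assms by simp
qed

lemma rot_Nrm:
  assumes "a < d" "b < d" "a \<noteq> b" "c\<^sup>2 + s\<^sup>2 = 1"
  shows "rot a b c s (Nrm d x) = Nrm d (rot a b c s x)"
  using assms unfolding Nrm_def sqnorm_rot[OF assms]
  by (auto simp: rot_def fun_eq_iff diff_divide_distrib add_divide_distrib)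

lemma sphere_rot:
  assumes "a < d" "b < d" "a \<noteq> b" "c\<^sup>2 + s\<^sup>2 = 1" "c \<noteq> -1"
  shows "distr (sphere_measure d) (lebesgue_d d) (rot a b c s) = sphere_measure d"
  by (rule sphere_inv[OF rot_measurable[OF assms] leb_rot[OF assms] sqnorm_rot rot_Nrm]) (use assms in auto)

definition flip :: "nat \<Rightarrow> (nat \<Rightarrow> real) \<Rightarrow> (nat \<Rightarrow> real)" where
  "flip a x = x(a := - x a)"

lemma flip_alt: "flip a = (\<lambda>x. x(a := (-1) * x a + 0 * x b))"
  by (auto simp: flip_def fun_eq_iff)

lemma sphere_flip:
  assumes "a < d" "b < d" "a \<noteq> b"
  shows "distr (sphere_measure d) (lebesgue_d d) (flip a) = sphere_measure d"
proof (rule sphere_inv)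
  show "flip a \<in> lebesgue_d d \<rightarrow>\<^sub>M lebesgue_d d"
    unfolding flip_alt[of a b] by (rule upd_measurable) (use assms in auto)
  show "distr (lebesgue_d d) (lebesgue_d d) (flip a) = lebesgue_d d"
    unfolding flip_alt[of a b] by (rule leb_shear) (use assms in auto)
  show "sqnorm d (flip a x) = sqnorm d x" for x
    using assms by (simp add: flip_def sqnorm_upd)
  show "flip a (Nrm d x) = Nrm d (flip a x)" for x
    using assms by (auto simp: flip_def Nrm_def fun_eq_iff sqnorm_upd)
qed




definition dl :: "nat \<Rightarrow> nat \<Rightarrow> nat" where "dl i = (\<lambda>t. if t = i then 1 else 0)"

lemma prod_dl:
  fixes v :: "nat \<Rightarrow> real"
  assumes "i < d"
  shows "(\<Prod>t<d. v t ^ (dl i t + r t)) = v i * (\<Prod>t<d. v t ^ r t)"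
proof -
  have "(\<Prod>t<d. v t ^ (dl i t + r t)) = (\<Prod>t<d. v t ^ dl i t) * (\<Prod>t<d. v t ^ r t)"
    by (simp add: power_add prod.distrib)
  moreover have "(\<Prod>t<d. v t ^ dl i t) = (\<Prod>t<d. if t = i then v t else 1)"
    by (rule prod.cong) (auto simp: dl_def)
  ultimately show ?thesis using assms by simp
qed

lemma prod_dl1:
  fixes v :: "nat \<Rightarrow> real"
  assumes "i < d"
  shows "(\<Prod>t<d. v t ^ dl i t) = v i"
proof -
  have "(\<Prod>t<d. v t ^ dl i t) = (\<Prod>t<d. if t = i then v t else 1)"
    by (rule prod.cong) (auto simp: dl_def)
  thus ?thesis using assms by simp
qed

lemma sum_dl: "i < d \<Longrightarrow> (\<Sum>t<d. dl i t) = 1"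
  unfolding dl_def by simp

lemma Nrm_bound: assumes "i < d" shows "\<bar>Nrm d x i\<bar> \<le> 1"
proof -
  have sq: "(x i)\<^sup>2 \<le> sqnorm d x"
    unfolding sqnorm_def using assms by (intro member_le_sum) auto
  show ?thesis
  proof (cases "sqnorm d x = 0")
    case True thus ?thesis using assms by (simp add: Nrm_def)
  next
    case False
    have pos: "sqnorm d x > 0" using False unfolding sqnorm_def
      by (metis less_eq_real_def sum_nonneg zero_le_power2)
    have "\<bar>x i\<bar> \<le> sqrt (sqnorm d x)" using sq real_le_rsqrt by (metis abs_le_square_iff real_sqrt_abs real_sqrt_le_iff)
    thus ?thesis using assms pos by (simp add: Nrm_def abs_div divide_le_eq_1)
  qed
qed

definition dlt :: "nat \<Rightarrow> nat \<Rightarrow> real" where "dlt i j = (if i = j then 1 else 0)"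

context
  fixes d L u
  assumes design: "projective_2_design d L u"
begin

abbreviation "\<sigma> \<equiv> sphere_measure d"

lemma L_pos: "L > 0" using design unfolding projective_2_design_def by auto

lemma u_norm: "l < L \<Longrightarrow> sqnorm d (u l) = 1" using design unfolding projective_2_design_def by auto

lemma des: "k \<in> {0,2,4} \<Longrightarrow> homogeneous_exps d k S \<Longrightarrow>
   (1 / real L) * (\<Sum>l<L. poly_eval d S c (u l)) = integral\<^sup>L \<sigma> (poly_eval d S c)"
  using design unfolding projective_2_design_def by blast

lemma sigma_prob: "prob_space \<sigma>"
proof -
  have h: "homogeneous_exps d 0 {\<lambda>_. 0}" by (simp add: homogeneous_exps_def)
  have pe: "poly_eval d {\<lambda>_. 0} (\<lambda>_. 1) = (\<lambda>_. 1)" by (simp add: poly_eval_def fun_eq_iff)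
  have "(1 / real L) * (\<Sum>l<L. poly_eval d {\<lambda>_. 0} (\<lambda>_. 1) (u l)) = integral\<^sup>L \<sigma> (poly_eval d {\<lambda>_. 0} (\<lambda>_. 1))"
    by (rule des[OF _ h]) simp
  hence "measure \<sigma> (space \<sigma>) = 1" using L_pos unfolding pe by simp
  moreover have "emeasure \<sigma> (space \<sigma>) \<noteq> \<infinity>"
    proof
    assume "emeasure \<sigma> (space \<sigma>) = \<infinity>"
    hence "measure \<sigma> (space \<sigma>) = 0" by (simp add: measure_def)
    thus False using calculation by simp
  qed
  ultimately have "emeasure \<sigma> (space \<sigma>) = 1"
    using emeasure_eq_ennreal_measure by fastforce
  thus ?thesis by (rule prob_spaceI)
qed

interpretation S: prob_space \<sigma> by (rule sigma_prob)

lemma sets_sigma[simp]: "sets \<sigma> = sets (lebesgue_d d)" by (simp add: sphere_measure_def)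
lemma space_sigma[simp]: "space \<sigma> = space (lebesgue_d d)" by (simp add: sphere_measure_def)

lemma integrable_sigma:
  fixes f :: "(nat \<Rightarrow> real) \<Rightarrow> real"
  assumes f[measurable]: "f \<in> borel_measurable (lebesgue_d d)" and B: "\<And>x. \<bar>f (Nrm d x)\<bar> \<le> B"
  shows "integrable \<sigma> f"
proof -
  let ?U = "uniform_measure (lebesgue_d d) (unit_ball_d d)"
  have sU: "sets ?U = sets (lebesgue_d d)" by simp
  have NmU: "Nrm d \<in> measurable ?U (lebesgue_d d)" by (simp add: measurable_cong_sets[OF sU refl])
  have fin: "finite_measure ?U"
  proof
    have "emeasure ?U (space ?U) = emeasure \<sigma> (space \<sigma>)"
      proof -
      have "Nrm d -` space (lebesgue_d d) \<inter> space (lebesgue_d d) = space (lebesgue_d d)"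
        using measurable_space[OF Nrm_measurable] by auto
      thus ?thesis unfolding sphere_measure_Nrm using NmU by (subst emeasure_distr) auto
    qed
    thus "emeasure ?U (space ?U) \<noteq> \<infinity>" using S.emeasure_space_1 by simp
  qed
  have "integrable ?U (\<lambda>x. f (Nrm d x))"
    by (rule finite_measure.integrable_const_bound[OF fin, of _ B]) (use B NmU in auto)
  thus ?thesis unfolding sphere_measure_Nrm using NmU by (subst integrable_distr_eq) auto
qed

lemma integrable_mono2: "i < d \<Longrightarrow> j < d \<Longrightarrow> integrable \<sigma> (\<lambda>v. v i * v j)"
  by (rule integrable_sigma[of _ 1]) (auto simp: abs_mult intro: mult_le_one Nrm_bound)

lemma integrable_mono4: "i < d \<Longrightarrow> j < d \<Longrightarrow> k < d \<Longrightarrow> m < d \<Longrightarrow> integrable \<sigma> (\<lambda>v. v i * v j * v k * v m)"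
  by (rule integrable_sigma[of _ 1]) (auto simp: abs_mult intro!: mult_le_one Nrm_bound)

lemma des2:
  assumes "i < d" "j < d"
  shows "(1 / real L) * (\<Sum>l<L. u l i * u l j) = integral\<^sup>L \<sigma> (\<lambda>v. v i * v j)"
proof -
  define \<alpha> where "\<alpha> = (\<lambda>t. dl i t + (dl j t + 0))"
  have h: "homogeneous_exps d 2 {\<alpha>}" using assms
    by (auto simp: homogeneous_exps_def \<alpha>_def sum.distrib sum_dl) (auto simp: dl_def)
  have pe: "poly_eval d {\<alpha>} (\<lambda>_. 1) = (\<lambda>v. v i * v j)"
    using assms by (simp add: poly_eval_def fun_eq_iff \<alpha>_def prod_dl prod_dl1)
  show ?thesis using des[OF _ h, of "\<lambda>_. 1"] unfolding pe by simp
qed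

lemma des4:
  assumes "i < d" "j < d" "k < d" "m < d"
  shows "(1 / real L) * (\<Sum>l<L. u l i * u l j * u l k * u l m) = integral\<^sup>L \<sigma> (\<lambda>v. v i * v j * v k * v m)"
proof -
  define \<alpha> where "\<alpha> = (\<lambda>t. dl i t + (dl j t + (dl k t + (dl m t + 0))))"
  have h: "homogeneous_exps d 4 {\<alpha>}" using assms
    by (auto simp: homogeneous_exps_def \<alpha>_def sum.distrib sum_dl) (auto simp: dl_def)
  have pe: "poly_eval d {\<alpha>} (\<lambda>_. 1) = (\<lambda>v. v i * v j * v k * v m)"
    using assms by (simp add: poly_eval_def fun_eq_iff \<alpha>_def prod_dl prod_dl1 mult.assoc)
  show ?thesis using des[OF _ h, of "\<lambda>_. 1"] unfolding pe by simp
qed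


lemma int_rot:
  fixes f :: "(nat \<Rightarrow> real) \<Rightarrow> real"
  assumes ab: "a < d" "b < d" "a \<noteq> b" "c\<^sup>2 + s\<^sup>2 = 1" "c \<noteq> -1"
    and f[measurable]: "f \<in> borel_measurable (lebesgue_d d)"
  shows "integral\<^sup>L \<sigma> (\<lambda>v. f (rot a b c s v)) = integral\<^sup>L \<sigma> f"
proof -
  have m: "rot a b c s \<in> measurable \<sigma> (lebesgue_d d)"
    using rot_measurable[OF ab] by (simp add: measurable_cong_sets[OF sets_sigma refl])
  have "integral\<^sup>L \<sigma> f = integral\<^sup>L (distr \<sigma> (lebesgue_d d) (rot a b c s)) f"
    by (simp add: sphere_rot[OF ab])
  also have "\<dots> = integral\<^sup>L \<sigma> (\<lambda>v. f (rot a b c s v))"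
    by (rule integral_distr[OF m f])
  finally show ?thesis by simp
qed

lemma int_flip:
  fixes f :: "(nat \<Rightarrow> real) \<Rightarrow> real"
  assumes ab: "a < d" "b < d" "a \<noteq> b"
    and f[measurable]: "f \<in> borel_measurable (lebesgue_d d)"
  shows "integral\<^sup>L \<sigma> (\<lambda>v. f (flip a v)) = integral\<^sup>L \<sigma> f"
proof -
  have m0: "flip a \<in> measurable (lebesgue_d d) (lebesgue_d d)"
    unfolding flip_alt[of a b] by (rule upd_measurable) (use ab in auto)
  have m: "flip a \<in> measurable \<sigma> (lebesgue_d d)"
    using m0 by (simp add: measurable_cong_sets[OF sets_sigma refl])
  have "integral\<^sup>L \<sigma> f = integral\<^sup>L (distr \<sigma> (lebesgue_d d) (flip a)) f"
    by (simp add: sphere_flip[OF ab])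
  also have "\<dots> = integral\<^sup>L \<sigma> (\<lambda>v. f (flip a v))"
    by (rule integral_distr[OF m f])
  finally show ?thesis by simp
qed

definition M2 where "M2 i j = integral\<^sup>L \<sigma> (\<lambda>v. v i * v j)"
definition M4 where "M4 i j k m = integral\<^sup>L \<sigma> (\<lambda>v. v i * v j * v k * v m)"

lemma odd2: assumes "a < d" "j < d" "j \<noteq> a" shows "M2 a j = 0"
proof -
  have "integral\<^sup>L \<sigma> (\<lambda>v. (flip a v) a * (flip a v) j) = M2 a j"
    unfolding M2_def by (rule int_flip[of a j "\<lambda>v. v a * v j"]) (use assms in auto)
  moreover have "(\<lambda>v. (flip a v) a * (flip a v) j) = (\<lambda>v. - (v a * v j))"
    using assms by (auto simp: flip_def fun_eq_iff)
  ultimately have "- M2 a j = M2 a j" unfolding M2_def by simp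
  thus ?thesis by simp
qed

lemma odd4: assumes "a < d" "j < d" "k < d" "m < d" "j \<noteq> a" "k \<noteq> a" "m \<noteq> a"
  shows "M4 a j k m = 0"
proof -
  have "integral\<^sup>L \<sigma> (\<lambda>v. (flip a v) a * (flip a v) j * (flip a v) k * (flip a v) m) = M4 a j k m"
    unfolding M4_def by (rule int_flip[of a j "\<lambda>v. v a * v j * v k * v m"]) (use assms in auto)
  moreover have "(\<lambda>v. (flip a v) a * (flip a v) j * (flip a v) k * (flip a v) m) = (\<lambda>v. - (v a * v j * v k * v m))"
    using assms by (auto simp: flip_def fun_eq_iff)
  ultimately have "- M4 a j k m = M4 a j k m" unfolding M4_def by simp
  thus ?thesis by simp
qed

lemma M4_sym1: "M4 i j k m = M4 j i k m" unfolding M4_def by (simp add: ac_simps)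
lemma M4_sym2: "M4 i j k m = M4 i k j m" unfolding M4_def by (simp add: ac_simps)
lemma M4_sym3: "M4 i j k m = M4 i j m k" unfolding M4_def by (simp add: ac_simps)
lemma M2_sym: "M2 i j = M2 j i" unfolding M2_def by (simp add: ac_simps)

lemma eq2: assumes "a < d" "b < d" "a \<noteq> b" shows "M2 a a = M2 b b"
proof -
  have "integral\<^sup>L \<sigma> (\<lambda>v. (rot a b 0 1 v) a * (rot a b 0 1 v) a) = M2 a a"
    unfolding M2_def by (rule int_rot[of a b 0 1 "\<lambda>v. v a * v a"]) (use assms in auto)
  moreover have "(\<lambda>v. (rot a b 0 1 v) a * (rot a b 0 1 v) a) = (\<lambda>v. v b * v b)"
    using assms by (auto simp: rot_def fun_eq_iff)
  ultimately show ?thesis unfolding M2_def by simp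
qed

lemma eq4: assumes "a < d" "b < d" "a \<noteq> b" shows "M4 a a a a = M4 b b b b"
proof -
  have "integral\<^sup>L \<sigma> (\<lambda>v. (rot a b 0 1 v) a * (rot a b 0 1 v) a * (rot a b 0 1 v) a * (rot a b 0 1 v) a) = M4 a a a a"
    unfolding M4_def by (rule int_rot[of a b 0 1 "\<lambda>v. v a * v a * v a * v a"]) (use assms in auto)
  moreover have "(\<lambda>v. (rot a b 0 1 v) a * (rot a b 0 1 v) a * (rot a b 0 1 v) a * (rot a b 0 1 v) a) = (\<lambda>v. v b * v b * v b * v b)"
    using assms by (auto simp: rot_def fun_eq_iff)
  ultimately show ?thesis unfolding M4_def by simp
qed

lemma rel45: assumes ab: "a < d" "b < d" "a \<noteq> b"
  shows "4 * M4 a a a a = M4 a a a a + 6 * M4 a a b b + M4 b b b b"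
proof -
  define c :: real where "c = sqrt 2 / 2"
  have c2: "c\<^sup>2 = 1/2" unfolding c_def by (simp add: power_divide)
  have cs: "c\<^sup>2 + c\<^sup>2 = 1" using c2 by simp
  have cn: "c \<noteq> -1" proof - have "sqrt 2 / 2 \<ge> (0::real)" by simp thus ?thesis unfolding c_def by linarith qed
  have c4: "c^4 = 1/4" proof -
    have "c^4 = (c\<^sup>2)\<^sup>2" by simp
    also have "\<dots> = 1/4" unfolding c2 by (simp add: power2_eq_square)
    finally show ?thesis .
  qed
  have "integral\<^sup>L \<sigma> (\<lambda>v. (rot a b c c v) a * (rot a b c c v) a * (rot a b c c v) a * (rot a b c c v) a) = M4 a a a a"
    unfolding M4_def by (rule int_rot[of a b c c "\<lambda>v. v a * v a * v a * v a"]) (use ab cs cn in auto)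
  moreover have "(\<lambda>v. (rot a b c c v) a * (rot a b c c v) a * (rot a b c c v) a * (rot a b c c v) a) =
     (\<lambda>v. (1/4) * (v a * v a * v a * v a) - 1 * (v a * v a * v a * v b) + (3/2) * (v a * v a * v b * v b)
        - 1 * (v a * v b * v b * v b) + (1/4) * (v b * v b * v b * v b))"
  proof
    fix v :: "nat \<Rightarrow> real"
    have ra: "(rot a b c c v) a = c * (v a - v b)"
      using ab by (simp add: rot_def right_diff_distrib)
    have "(rot a b c c v) a * (rot a b c c v) a * (rot a b c c v) a * (rot a b c c v) a = (c * (v a - v b))^4"
      unfolding ra by (simp add: power4_eq_xxxx)
    also have "\<dots> = c^4 * (v a - v b)^4" by (simp add: power_mult_distrib)
    also have "\<dots> = (1/4) * (v a - v b)^4" by (simp only: c4)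
    also have "\<dots> = (1/4) * (v a * v a * v a * v a) - 1 * (v a * v a * v a * v b) + (3/2) * (v a * v a * v b * v b)
        - 1 * (v a * v b * v b * v b) + (1/4) * (v b * v b * v b * v b)"
      unfolding power4_eq_xxxx by (simp add: algebra_simps)
    finally show "(rot a b c c v) a * (rot a b c c v) a * (rot a b c c v) a * (rot a b c c v) a =
       (1/4) * (v a * v a * v a * v a) - 1 * (v a * v a * v a * v b) + (3/2) * (v a * v a * v b * v b)
        - 1 * (v a * v b * v b * v b) + (1/4) * (v b * v b * v b * v b)" .
  qed
  ultimately have "M4 a a a a = (1/4) * M4 a a a a - 1 * M4 a a a b + (3/2) * M4 a a b b - 1 * M4 a b b b + (1/4) * M4 b b b b"
    unfolding M4_def using ab by (simp add: integrable_mono4)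
  moreover have "M4 a a a b = 0" using M4_sym1 M4_sym2 M4_sym3 odd4[of b a a a] ab
    by (metis)
  moreover have "M4 a b b b = 0" using odd4[of a b b b] ab by simp
  ultimately show ?thesis by simp
qed


lemma d_pos: "d > 0"
proof (rule ccontr)
  assume "\<not> d > 0"
  hence "sqnorm d (u 0) = 0" by (simp add: sqnorm_def)
  thus False using u_norm[of 0] L_pos by simp
qed

lemma norm2: "(\<Sum>i<d. M2 i i) = 1"
proof -
  have "(\<Sum>i<d. M2 i i) = (\<Sum>i<d. (1 / real L) * (\<Sum>l<L. u l i * u l i))"
    by (rule sum.cong) (auto simp: M2_def des2[symmetric])
  also have "\<dots> = (1 / real L) * (\<Sum>i<d. \<Sum>l<L. u l i * u l i)"
    by (simp add: sum_distrib_left)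
  also have "\<dots> = (1 / real L) * (\<Sum>l<L. \<Sum>i<d. u l i * u l i)"
    by (subst sum.swap) (rule refl)
  also have "\<dots> = (1 / real L) * (\<Sum>l<L. sqnorm d (u l))"
    by (simp add: sqnorm_def power2_eq_square)
  also have "\<dots> = 1" using L_pos by (simp add: u_norm)
  finally show ?thesis .
qed

lemma norm4: "(\<Sum>i<d. \<Sum>k<d. M4 i i k k) = 1"
proof -
  have "(\<Sum>i<d. \<Sum>k<d. M4 i i k k) = (\<Sum>i<d. \<Sum>k<d. (1 / real L) * (\<Sum>l<L. u l i * u l i * u l k * u l k))"
    by (intro sum.cong) (auto simp: M4_def des4[symmetric])
  also have "\<dots> = (1 / real L) * (\<Sum>i<d. \<Sum>k<d. \<Sum>l<L. u l i * u l i * u l k * u l k)"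
    by (simp add: sum_distrib_left)
  also have "\<dots> = (1 / real L) * (\<Sum>i<d. \<Sum>l<L. \<Sum>k<d. u l i * u l i * u l k * u l k)"
    by (subst (2) sum.swap) (rule refl)
  also have "\<dots> = (1 / real L) * (\<Sum>l<L. \<Sum>i<d. \<Sum>k<d. u l i * u l i * u l k * u l k)"
    by (subst sum.swap) (rule refl)
  also have "\<dots> = (1 / real L) * (\<Sum>l<L. sqnorm d (u l) * sqnorm d (u l))"
    by (simp add: sqnorm_def power2_eq_square sum_product mult.assoc)
  also have "\<dots> = 1" using L_pos by (simp add: u_norm)
  finally show ?thesis .
qed

lemma M2_formula: assumes "i < d" "j < d" shows "M2 i j = (if i = j then 1 / real d else 0)"
proof (cases "i = j")
  case False thus ?thesis using odd2[of i j] assms by simp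
next
  case True
  have "\<forall>k<d. M2 k k = M2 i i"
  proof (intro allI impI)
    fix k assume k: "k < d"
    show "M2 k k = M2 i i" using eq2[of k i] k assms by (cases "k = i") auto
  qed
  hence "(\<Sum>k<d. M2 k k) = real d * M2 i i" by simp
  thus ?thesis using norm2 True d_pos by (simp add: field_simps)
qed

lemma M4_diag_all: assumes "i < d" shows "M4 i i i i = M4 0 0 0 0"
  using eq4[of 0 i] assms d_pos by (cases "i = 0") auto

lemma M4_pair_rel: assumes "i < d" "k < d" "i \<noteq> k" shows "M4 i i k k = M4 0 0 0 0 / 3"
  using rel45[OF assms] M4_diag_all[OF assms(1)] M4_diag_all[OF assms(2)] by simp

lemma alpha_val: "M4 0 0 0 0 = 3 / (real d * (real d + 2))"
proof -
  let ?a = "M4 0 0 0 0"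
  have "\<forall>i<d. (\<Sum>k<d. M4 i i k k) = real d * ?a / 3 + 2 * ?a / 3"
  proof (intro allI impI)
    fix i assume i: "i < d"
    have "(\<Sum>k<d. M4 i i k k) = (\<Sum>k<d. ?a / 3 + (if k = i then 2 * ?a / 3 else 0))"
    proof (rule sum.cong)
      fix k assume k: "k \<in> {..<d}"
      show "M4 i i k k = ?a / 3 + (if k = i then 2 * ?a / 3 else 0)"
      proof (cases "k = i")
        case True thus ?thesis using M4_diag_all[OF i] by simp
      next
        case False thus ?thesis using M4_pair_rel[of i k] i k by simp
      qed
    qed simp
    also have "\<dots> = real d * ?a / 3 + 2 * ?a / 3" using i by (simp add: sum.distrib)
    finally show "(\<Sum>k<d. M4 i i k k) = real d * ?a / 3 + 2 * ?a / 3" .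
  qed
  hence "(\<Sum>i<d. \<Sum>k<d. M4 i i k k) = real d * (real d * ?a / 3 + 2 * ?a / 3)" by simp
  hence "real d * (real d * ?a / 3 + 2 * ?a / 3) = 1" using norm4 by simp
  hence "?a * (real d * (real d + 2)) = 3" by (simp add: algebra_simps)
  moreover have "real d * (real d + 2) > 0" using d_pos by simp
  ultimately show ?thesis by (simp add: field_simps)
qed


lemma M4_formula:
  assumes "i < d" "j < d" "k < d" "m < d"
  shows "M4 i j k m = (1 / (real d * (real d + 2))) * (dlt i j * dlt k m + dlt i k * dlt j m + dlt i m * dlt j k)"
proof -
  let ?b = "1 / (real d * (real d + 2))"
  have A: "\<And>i. i < d \<Longrightarrow> M4 i i i i = 3 * ?b" proof - fix i assume "i < d" thus "M4 i i i i = 3 * ?b" using M4_diag_all[of i] alpha_val by simp qed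
  have B: "\<And>i k. i < d \<Longrightarrow> k < d \<Longrightarrow> i \<noteq> k \<Longrightarrow> M4 i i k k = ?b" using M4_pair_rel alpha_val by simp
  have B2: "\<And>i k. i < d \<Longrightarrow> k < d \<Longrightarrow> i \<noteq> k \<Longrightarrow> M4 i k i k = ?b"
  proof - fix i k assume "i < d" "k < d" "i \<noteq> k" thus "M4 i k i k = ?b" using B[of i k] M4_sym2[of i i k k] by simp qed
  have B3: "\<And>i k. i < d \<Longrightarrow> k < d \<Longrightarrow> i \<noteq> k \<Longrightarrow> M4 i k k i = ?b"
  proof - fix i k assume "i < d" "k < d" "i \<noteq> k" thus "M4 i k k i = ?b" using B2[of i k] M4_sym3[of i k i k] by simp qed
  have O1: "\<And>i j k m. i < d \<Longrightarrow> j < d \<Longrightarrow> k < d \<Longrightarrow> m < d \<Longrightarrow> j \<noteq> i \<Longrightarrow> k \<noteq> i \<Longrightarrow> m \<noteq> i \<Longrightarrow> M4 i j k m = 0"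
    using odd4 by blast
  have O2: "\<And>i j k m. i < d \<Longrightarrow> j < d \<Longrightarrow> k < d \<Longrightarrow> m < d \<Longrightarrow> j \<noteq> i \<Longrightarrow> j \<noteq> k \<Longrightarrow> j \<noteq> m \<Longrightarrow> M4 i j k m = 0"
    by (subst M4_sym1) (rule odd4, auto)
  have O3: "\<And>i j k m. i < d \<Longrightarrow> j < d \<Longrightarrow> k < d \<Longrightarrow> m < d \<Longrightarrow> k \<noteq> i \<Longrightarrow> k \<noteq> j \<Longrightarrow> k \<noteq> m \<Longrightarrow> M4 i j k m = 0"
    by (subst M4_sym2, subst M4_sym1) (rule odd4, auto)
  have O4: "\<And>i j k m. i < d \<Longrightarrow> j < d \<Longrightarrow> k < d \<Longrightarrow> m < d \<Longrightarrow> m \<noteq> i \<Longrightarrow> m \<noteq> j \<Longrightarrow> m \<noteq> k \<Longrightarrow> M4 i j k m = 0"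
    by (subst M4_sym3, subst M4_sym2, subst M4_sym1) (rule odd4, auto)
  note as = assms
  show ?thesis
  proof (cases "i = j")
    case ij: True
    show ?thesis
    proof (cases "k = m")
      case km: True
      show ?thesis
      proof (cases "i = k")
        case True
        have "M4 i j k m = M4 i i i i" using ij km True by simp
        thus ?thesis using A[of i] as ij km True by (simp add: dlt_def)
      next
        case False
        have "M4 i j k m = M4 i i k k" using ij km by simp
        thus ?thesis using B[of i k] as ij km False by (simp add: dlt_def)
      qed
    next
      case km: False
      show ?thesis
      proof (cases "k = i")
        case True
        have "M4 i j k m = 0" using O4[of i j k m] as ij km True by simp
        thus ?thesis using ij km True by (simp add: dlt_def)
      next
        case False
        have "M4 i j k m = 0" using O3[of i j k m] as ij km False by simp
        thus ?thesis using ij km False by (simp add: dlt_def)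
      qed
    qed
  next
    case ij: False
    show ?thesis
    proof (cases "i = k")
      case ik: True
      show ?thesis
      proof (cases "j = m")
        case True
        have "M4 i j k m = M4 i j i j" using ik True by simp
        thus ?thesis using B2[of i j] as ij ik True by (simp add: dlt_def)
      next
        case False
        have "M4 i j k m = 0" using O2[of i j k m] as ij ik False by simp
        thus ?thesis using ij ik False by (simp add: dlt_def)
      qed
    next
      case ik: False
      show ?thesis
      proof (cases "i = m")
        case im: True
        show ?thesis
        proof (cases "j = k")
          case True
          have "M4 i j k m = M4 i j j i" using im True by simp
          thus ?thesis using B3[of i j] as ij ik im True by (simp add: dlt_def)
        next
          case False
          have "M4 i j k m = 0" using O2[of i j k m] as ij ik im False by simp
          thus ?thesis using ij ik im False by (simp add: dlt_def)
        qed
      next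
        case im: False
        have "M4 i j k m = 0" using O1[of i j k m] as ij ik im by simp
        thus ?thesis using ij ik im by (simp add: dlt_def)
      qed
    qed
  qed
qed


lemma M2_int: "integral\<^sup>L \<sigma> (\<lambda>v. v i * v j) = M2 i j" by (simp add: M2_def)
lemma M4_int: "integral\<^sup>L \<sigma> (\<lambda>v. v i * v j * v k * v m) = M4 i j k m" by (simp add: M4_def)

end



lemma sdl: "k < n \<Longrightarrow> (\<Sum>k'<n. f k' * dlt k k') = f k"
proof -
  assume k: "k < n"
  have "(\<Sum>k'<n. f k' * dlt k k') = (\<Sum>k'<n. if k = k' then f k' else 0)"
    by (rule sum.cong) (auto simp: dlt_def)
  thus ?thesis using k by simp
qed

lemma T1:
  fixes p q :: "nat \<Rightarrow> real"
  shows "(\<Sum>j<n. \<Sum>j'<n. \<Sum>k<n. \<Sum>k'<n. (p j * p j' * q k * q k' * dlt j j') * dlt k k')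
     = (\<Sum>j<n. (p j)\<^sup>2) * (\<Sum>k<n. (q k)\<^sup>2)"
proof -
  have "(\<Sum>j<n. \<Sum>j'<n. \<Sum>k<n. \<Sum>k'<n. (p j * p j' * q k * q k' * dlt j j') * dlt k k')
      = (\<Sum>j<n. \<Sum>j'<n. \<Sum>k<n. p j * p j' * q k * q k * dlt j j')" by (simp add: sdl)
  also have "\<dots> = (\<Sum>j<n. \<Sum>k<n. \<Sum>j'<n. (p j * q k * q k * p j') * dlt j j')"
    by (rule sum.cong[OF refl], subst sum.swap, intro sum.cong refl) (simp add: ac_simps)
  also have "\<dots> = (\<Sum>j<n. \<Sum>k<n. p j * q k * q k * p j)" by (simp add: sdl)
  also have "\<dots> = (\<Sum>j<n. (p j)\<^sup>2) * (\<Sum>k<n. (q k)\<^sup>2)"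
    by (simp add: sum_product power2_eq_square ac_simps)
  finally show ?thesis .
qed

lemma T2:
  fixes p q :: "nat \<Rightarrow> real"
  shows "(\<Sum>j<n. \<Sum>j'<n. \<Sum>k<n. \<Sum>k'<n. (p j * p j' * q k * q k' * dlt j k) * dlt j' k')
     = (\<Sum>j<n. p j * q j)\<^sup>2"
proof -
  have "(\<Sum>j<n. \<Sum>j'<n. \<Sum>k<n. \<Sum>k'<n. (p j * p j' * q k * q k' * dlt j k) * dlt j' k')
      = (\<Sum>j<n. \<Sum>j'<n. \<Sum>k<n. p j * p j' * q k * q j' * dlt j k)" by (simp add: sdl)
  also have "\<dots> = (\<Sum>j<n. \<Sum>j'<n. p j * p j' * q j * q j')" by (simp add: sdl)
  also have "\<dots> = (\<Sum>j<n. p j * q j)\<^sup>2"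
    by (simp add: sum_product power2_eq_square ac_simps)
  finally show ?thesis .
qed

lemma T3:
  fixes p q :: "nat \<Rightarrow> real"
  shows "(\<Sum>j<n. \<Sum>j'<n. \<Sum>k<n. \<Sum>k'<n. (p j * p j' * q k * q k' * dlt j' k) * dlt j k')
     = (\<Sum>j<n. p j * q j)\<^sup>2"
proof -
  have "(\<Sum>j<n. \<Sum>j'<n. \<Sum>k<n. \<Sum>k'<n. (p j * p j' * q k * q k' * dlt j' k) * dlt j k')
      = (\<Sum>j<n. \<Sum>j'<n. \<Sum>k<n. p j * p j' * q k * q j * dlt j' k)" by (simp add: sdl)
  also have "\<dots> = (\<Sum>j<n. \<Sum>j'<n. p j * p j' * q j' * q j)" by (simp add: sdl)
  also have "\<dots> = (\<Sum>j<n. p j * q j)\<^sup>2"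
    by (simp add: sum_product power2_eq_square ac_simps)
  finally show ?thesis .
qed


lemma swap3: "(\<Sum>l\<in>A. \<Sum>j\<in>B. \<Sum>k\<in>C. f l j k) = (\<Sum>j\<in>B. \<Sum>k\<in>C. \<Sum>l\<in>A. f l j k)"
  by (subst sum.swap, rule sum.cong[OF refl], subst sum.swap, rule refl)

lemma swap5: "(\<Sum>l\<in>A. \<Sum>j\<in>B. \<Sum>j'\<in>B'. \<Sum>k\<in>C. \<Sum>k'\<in>C'. f l j j' k k')
   = (\<Sum>j\<in>B. \<Sum>j'\<in>B'. \<Sum>k\<in>C. \<Sum>k'\<in>C'. \<Sum>l\<in>A. f l j j' k k')"
proof -
  have "(\<Sum>l\<in>A. \<Sum>j\<in>B. \<Sum>j'\<in>B'. \<Sum>k\<in>C. \<Sum>k'\<in>C'. f l j j' k k')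
     = (\<Sum>j\<in>B. \<Sum>l\<in>A. \<Sum>j'\<in>B'. \<Sum>k\<in>C. \<Sum>k'\<in>C'. f l j j' k k')"
    by (rule sum.swap)
  also have "\<dots> = (\<Sum>j\<in>B. \<Sum>j'\<in>B'. \<Sum>l\<in>A. \<Sum>k\<in>C. \<Sum>k'\<in>C'. f l j j' k k')"
    by (rule sum.cong[OF refl], rule sum.swap)
  also have "\<dots> = (\<Sum>j\<in>B. \<Sum>j'\<in>B'. \<Sum>k\<in>C. \<Sum>l\<in>A. \<Sum>k'\<in>C'. f l j j' k k')"
    by (rule sum.cong[OF refl], rule sum.cong[OF refl], rule sum.swap)
  also have "\<dots> = (\<Sum>j\<in>B. \<Sum>j'\<in>B'. \<Sum>k\<in>C. \<Sum>k'\<in>C'. \<Sum>l\<in>A. f l j j' k k')"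
    by (rule sum.cong[OF refl], rule sum.cong[OF refl], rule sum.cong[OF refl], rule sum.swap)
  finally show ?thesis .
qed

lemma sq_sum: "(\<Sum>j\<in>A. a j)\<^sup>2 = (\<Sum>j\<in>A. \<Sum>j'\<in>A. a j * a j') " for a :: "nat \<Rightarrow> real"
  by (simp add: power2_eq_square sum_product)

lemma prod_sums4:
  fixes a b :: "nat \<Rightarrow> real"
  shows "(\<Sum>j\<in>A. a j)\<^sup>2 * (\<Sum>k\<in>C. b k)\<^sup>2 = (\<Sum>j\<in>A. \<Sum>j'\<in>A. \<Sum>k\<in>C. \<Sum>k'\<in>C. a j * a j' * (b k * b k'))"
proof -
  have "(\<Sum>j\<in>A. a j)\<^sup>2 * (\<Sum>k\<in>C. b k)\<^sup>2 = (\<Sum>j\<in>A. \<Sum>j'\<in>A. a j * a j' * (\<Sum>k\<in>C. b k)\<^sup>2)"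
    unfolding sq_sum[of a] by (simp add: sum_distrib_right)
  also have "\<dots> = (\<Sum>j\<in>A. \<Sum>j'\<in>A. \<Sum>k\<in>C. \<Sum>k'\<in>C. a j * a j' * (b k * b k'))"
    unfolding sq_sum[of b] by (simp add: sum_distrib_left)
  finally show ?thesis .
qed

context
  fixes d L u
  assumes design: "projective_2_design d L u"
begin

lemma C1:
  fixes p q :: "nat \<Rightarrow> real"
  assumes nd: "n \<le> d"
  shows "(1 / real L) * (\<Sum>l<L. (\<Sum>j<n. p j * u l j) * (\<Sum>k<n. q k * u l k)) = (1 / real d) * (\<Sum>j<n. p j * q j)"
proof -
  have "(1 / real L) * (\<Sum>l<L. (\<Sum>j<n. p j * u l j) * (\<Sum>k<n. q k * u l k))
     = (1 / real L) * (\<Sum>l<L. \<Sum>j<n. \<Sum>k<n. (p j * q k) * (u l j * u l k))"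
    by (simp add: sum_product ac_simps)
  also have "\<dots> = (\<Sum>j<n. \<Sum>k<n. (p j * q k) * ((1 / real L) * (\<Sum>l<L. u l j * u l k)))"
    by (simp add: sum_distrib_left ac_simps, rule swap3)
  also have "\<dots> = (\<Sum>j<n. \<Sum>k<n. (p j * q k * (1 / real d)) * dlt j k)"
  proof (intro sum.cong refl)
    fix j k assume "j \<in> {..<n}" "k \<in> {..<n}"
    hence jk: "j < d" "k < d" using nd by auto
    show "(p j * q k) * ((1 / real L) * (\<Sum>l<L. u l j * u l k)) = (p j * q k * (1 / real d)) * dlt j k"
      using des2[OF design jk] M2_formula[OF design jk] M2_int[OF design] by (simp add: dlt_def)
  qed
  also have "\<dots> = (\<Sum>j<n. p j * q j * (1 / real d))" by (rule sum.cong[OF refl], rule sdl) auto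
  also have "\<dots> = (1 / real d) * (\<Sum>j<n. p j * q j)" by (simp add: sum_distrib_left ac_simps)
  finally show ?thesis .
qed


lemma C2:
  fixes p q :: "nat \<Rightarrow> real"
  assumes nd: "n \<le> d"
  shows "(1 / real L) * (\<Sum>l<L. (\<Sum>j<n. p j * u l j)\<^sup>2 * (\<Sum>k<n. q k * u l k)\<^sup>2)
     = (1 / (real d * (real d + 2))) * ((\<Sum>j<n. (p j)\<^sup>2) * (\<Sum>k<n. (q k)\<^sup>2) + 2 * (\<Sum>j<n. p j * q j)\<^sup>2)"
proof -
  let ?b = "1 / (real d * (real d + 2))"
  define P where "P = (\<lambda>j j' k k'. p j * p j' * q k * q k')"
  have "(1 / real L) * (\<Sum>l<L. (\<Sum>j<n. p j * u l j)\<^sup>2 * (\<Sum>k<n. q k * u l k)\<^sup>2)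
     = (1 / real L) * (\<Sum>l<L. \<Sum>j<n. \<Sum>j'<n. \<Sum>k<n. \<Sum>k'<n. P j j' k k' * (u l j * u l j' * u l k * u l k'))"
  proof (intro arg_cong[where f="\<lambda>x. (1 / real L) * x"] sum.cong refl)
    fix l
    show "(\<Sum>j<n. p j * u l j)\<^sup>2 * (\<Sum>k<n. q k * u l k)\<^sup>2 = (\<Sum>j<n. \<Sum>j'<n. \<Sum>k<n. \<Sum>k'<n. P j j' k k' * (u l j * u l j' * u l k * u l k'))"
      unfolding prod_sums4 by (intro sum.cong refl) (simp add: P_def ac_simps)
  qed
  also have "\<dots> = (\<Sum>j<n. \<Sum>j'<n. \<Sum>k<n. \<Sum>k'<n. \<Sum>l<L. (1 / real L) * (P j j' k k' * (u l j * u l j' * u l k * u l k')))"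
    by (subst swap5) (simp add: sum_distrib_left)
  also have "\<dots> = (\<Sum>j<n. \<Sum>j'<n. \<Sum>k<n. \<Sum>k'<n.
        ?b * ((P j j' k k' * dlt j j') * dlt k k') + ?b * ((P j j' k k' * dlt j k) * dlt j' k') + ?b * ((P j j' k k' * dlt j' k) * dlt j k'))"
  proof (intro sum.cong refl)
    fix j j' k k' assume "j \<in> {..<n}" "j' \<in> {..<n}" "k \<in> {..<n}" "k' \<in> {..<n}"
    hence jk: "j < d" "j' < d" "k < d" "k' < d" using nd by auto
    have "(\<Sum>l<L. (1 / real L) * (P j j' k k' * (u l j * u l j' * u l k * u l k')))
       = P j j' k k' * ((1 / real L) * (\<Sum>l<L. u l j * u l j' * u l k * u l k'))"
      by (simp add: sum_distrib_left ac_simps)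
    also have "\<dots> = P j j' k k' * M4 d j j' k k'"
      using des4[OF design jk] M4_int[OF design] by simp
    also have "\<dots> = ?b * ((P j j' k k' * dlt j j') * dlt k k') + ?b * ((P j j' k k' * dlt j k) * dlt j' k') + ?b * ((P j j' k k' * dlt j' k) * dlt j k')"
      unfolding M4_formula[OF design jk] by (simp add: distrib_left ac_simps)
    finally show "(\<Sum>l<L. (1 / real L) * (P j j' k k' * (u l j * u l j' * u l k * u l k'))) =
        ?b * ((P j j' k k' * dlt j j') * dlt k k') + ?b * ((P j j' k k' * dlt j k) * dlt j' k') + ?b * ((P j j' k k' * dlt j' k) * dlt j k')" .
  qed
  also have "\<dots> = ?b * (\<Sum>j<n. \<Sum>j'<n. \<Sum>k<n. \<Sum>k'<n. (P j j' k k' * dlt j j') * dlt k k')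
      + ?b * (\<Sum>j<n. \<Sum>j'<n. \<Sum>k<n. \<Sum>k'<n. (P j j' k k' * dlt j k) * dlt j' k')
      + ?b * (\<Sum>j<n. \<Sum>j'<n. \<Sum>k<n. \<Sum>k'<n. (P j j' k k' * dlt j' k) * dlt j k')"
    by (simp only: sum.distrib sum_distrib_left)
  also have "\<dots> = ?b * ((\<Sum>j<n. (p j)\<^sup>2) * (\<Sum>k<n. (q k)\<^sup>2) + 2 * (\<Sum>j<n. p j * q j)\<^sup>2)"
    unfolding P_def T1 T2 T3 by (simp add: algebra_simps)
  finally show ?thesis .
qed


lemma dd_simp: "real d > 0 \<Longrightarrow> (real d)\<^sup>2 * ((1 / (real d * (real d + 2))) * t) = (real d / (real d + 2)) * t"
proof -
  assume d: "real d > 0"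
  have e: "(real d)\<^sup>2 * (1 / (real d * (real d + 2))) = real d / (real d + 2)"
    using d by (simp add: power2_eq_square divide_simps)
  show ?thesis by (simp only: e mult.assoc[symmetric])
qed

lemma sum_sq_shift: fixes f :: "nat \<Rightarrow> real"
  shows "(\<Sum>l<L. (f l - c)\<^sup>2) = (\<Sum>l<L. (f l)\<^sup>2) - 2 * c * (\<Sum>l<L. f l) + real L * c\<^sup>2"
  by (simp add: power2_diff sum.distrib sum_subtractf sum_distrib_left ac_simps)

lemma y_vec_eq:
  "y_vec n d A u x l i = real d * ((\<Sum>j<n. A i j * u l j) * (\<Sum>j<n. x j * u l j))"
proof -
  have d0: "sqrt (real d) * sqrt (real d) = real d" by simp
  have h1: "(\<Sum>j<n. A i j * z_vec n d u l j) = sqrt (real d) * (\<Sum>j<n. A i j * u l j)"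
    unfolding sum_distrib_left by (rule sum.cong) (auto simp: z_vec_def)
  have h2: "(\<Sum>j<n. z_vec n d u l j * x j) = sqrt (real d) * (\<Sum>j<n. x j * u l j)"
    unfolding sum_distrib_left by (rule sum.cong) (auto simp: z_vec_def)
  show ?thesis unfolding y_vec_def h1 h2 using d0 by (simp add: ac_simps)
qed

lemma y_mean:
  assumes nd: "n \<le> d"
  shows "(1 / real L) * (\<Sum>l<L. y_vec n d A u x l i) = (\<Sum>j<n. A i j * x j)"
proof -
  have "(1 / real L) * (\<Sum>l<L. y_vec n d A u x l i) = real d * ((1 / real L) * (\<Sum>l<L. (\<Sum>j<n. A i j * u l j) * (\<Sum>j<n. x j * u l j)))"
    by (simp add: y_vec_eq sum_distrib_left ac_simps)
  also have "\<dots> = real d * ((1 / real d) * (\<Sum>j<n. A i j * x j))"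
    by (subst C1[OF nd]) (rule refl)
  also have "\<dots> = (\<Sum>j<n. A i j * x j)" using d_pos[OF design] by simp
  finally show ?thesis .
qed

lemma y_second:
  assumes nd: "n \<le> d" and xn: "sqnorm n x = 1"
  shows "(1 / real L) * (\<Sum>l<L. (y_vec n d A u x l i)\<^sup>2)
     = (real d / (real d + 2)) * ((\<Sum>j<n. (A i j)\<^sup>2) + 2 * (\<Sum>j<n. A i j * x j)\<^sup>2)"
proof -
  have pw: "(y_vec n d A u x l i)\<^sup>2 = (real d)\<^sup>2 * ((\<Sum>j<n. A i j * u l j)\<^sup>2 * (\<Sum>j<n. x j * u l j)\<^sup>2)" for l
    by (simp add: y_vec_eq power_mult_distrib)
  have "(1 / real L) * (\<Sum>l<L. (y_vec n d A u x l i)\<^sup>2) = (real d)\<^sup>2 * ((1 / real L) * (\<Sum>l<L. (\<Sum>j<n. A i j * u l j)\<^sup>2 * (\<Sum>j<n. x j * u l j)\<^sup>2))"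
    unfolding pw sum_distrib_left[symmetric] by simp
  also have "\<dots> = (real d)\<^sup>2 * ((1 / (real d * (real d + 2))) * ((\<Sum>j<n. (A i j)\<^sup>2) * (\<Sum>k<n. (x k)\<^sup>2) + 2 * (\<Sum>j<n. A i j * x j)\<^sup>2))"
    by (subst C2[OF nd]) (rule refl)
  also have "\<dots> = (real d / (real d + 2)) * ((\<Sum>j<n. (A i j)\<^sup>2) + 2 * (\<Sum>j<n. A i j * x j)\<^sup>2)"
  proof -
    have xs: "(\<Sum>k<n. (x k)\<^sup>2) = 1" using xn by (simp add: sqnorm_def)
    show ?thesis unfolding xs mult_1_right by (rule dd_simp) (use d_pos[OF design] in simp)
  qed
  finally show ?thesis .
qed

lemma y_var:
  assumes nd: "n \<le> d" and xn: "sqnorm n x = 1"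
  shows "(1 / real L) * (\<Sum>l<L. (y_vec n d A u x l i - (\<Sum>j<n. A i j * x j))\<^sup>2) \<le> 2 * (\<Sum>j<n. (A i j)\<^sup>2)"
proof -
  let ?\<mu> = "\<Sum>j<n. A i j * x j"
  let ?a = "\<Sum>j<n. (A i j)\<^sup>2"
  have Lp: "real L > 0" using L_pos[OF design] by simp
  have "(1 / real L) * (\<Sum>l<L. (y_vec n d A u x l i - ?\<mu>)\<^sup>2)
     = (1 / real L) * (\<Sum>l<L. (y_vec n d A u x l i)\<^sup>2) - 2 * ?\<mu> * ((1 / real L) * (\<Sum>l<L. y_vec n d A u x l i)) + ?\<mu>\<^sup>2"
  proof -
    have "(\<Sum>l<L. (y_vec n d A u x l i - ?\<mu>)\<^sup>2) = (\<Sum>l<L. (y_vec n d A u x l i)\<^sup>2) - 2 * ?\<mu> * (\<Sum>l<L. y_vec n d A u x l i) + real L * ?\<mu>\<^sup>2"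
      by (rule sum_sq_shift)
    thus ?thesis using Lp by (simp add: field_simps)
  qed
  also have "\<dots> = (real d / (real d + 2)) * (?a + 2 * ?\<mu>\<^sup>2) - ?\<mu>\<^sup>2"
    unfolding y_second[OF nd xn] y_mean[OF nd] by (simp add: power2_eq_square)
  also have "\<dots> \<le> (?a + 2 * ?\<mu>\<^sup>2) - ?\<mu>\<^sup>2"
  proof -
    have "real d / (real d + 2) \<le> 1" by simp
    moreover have "0 \<le> ?a + 2 * ?\<mu>\<^sup>2" by (simp add: sum_nonneg)
    ultimately have "(real d / (real d + 2)) * (?a + 2 * ?\<mu>\<^sup>2) \<le> 1 * (?a + 2 * ?\<mu>\<^sup>2)"
      by (intro mult_right_mono) auto
    thus ?thesis by simp
  qed
  also have "\<dots> \<le> 2 * ?a"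
  proof -
    have "?\<mu>\<^sup>2 \<le> ?a * (\<Sum>j<n. (x j)\<^sup>2)" by (rule Cauchy_Schwarz_ineq_sum)
    also have "(\<Sum>j<n. (x j)\<^sup>2) = 1" using xn by (simp add: sqnorm_def)
    finally show ?thesis by simp
  qed
  finally show ?thesis .
qed

end




lemma pair_iter:
  fixes h :: "'a \<times> 'b \<Rightarrow> real"
  assumes fA: "finite (set_pmf A)" and fB: "finite (set_pmf B)"
  shows "measure_pmf.expectation (pair_pmf A B) h = measure_pmf.expectation A (\<lambda>a. measure_pmf.expectation B (\<lambda>b. h (a, b)))"
proof -
  have "measure_pmf.expectation (pair_pmf A B) h = (\<Sum>z\<in>set_pmf A \<times> set_pmf B. h z * pmf (pair_pmf A B) z)"
    by (rule integral_measure_pmf_real) (use fA fB in auto)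
  also have "\<dots> = (\<Sum>(a,b)\<in>set_pmf A \<times> set_pmf B. h (a, b) * (pmf A a * pmf B b))"
    by (rule sum.cong) (auto simp: pmf_pair)
  also have "\<dots> = (\<Sum>a\<in>set_pmf A. \<Sum>b\<in>set_pmf B. h (a, b) * (pmf A a * pmf B b))"
    by (rule sum.cartesian_product[symmetric])
  also have "\<dots> = (\<Sum>a\<in>set_pmf A. (\<Sum>b\<in>set_pmf B. h (a, b) * pmf B b) * pmf A a)"
    by (simp add: sum_distrib_right sum_distrib_left ac_simps)
  also have "\<dots> = (\<Sum>a\<in>set_pmf A. measure_pmf.expectation B (\<lambda>b. h (a, b)) * pmf A a)"
    by (intro sum.cong refl) (subst integral_measure_pmf_real[where A="set_pmf B"], use fB in auto)
  also have "\<dots> = measure_pmf.expectation A (\<lambda>a. measure_pmf.expectation B (\<lambda>b. h (a, b)))"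
    by (rule integral_measure_pmf_real[symmetric]) (use fA in auto)
  finally show ?thesis .
qed

lemma finite_set_Pi_pmf:
  assumes "finite I" "finite (set_pmf U)"
  shows "finite (set_pmf (Pi_pmf I dflt (\<lambda>_. U)))"
  using assms by (simp add: set_Pi_pmf finite_PiE_dflt)

lemma var_sum_Pi:
  fixes g :: "nat \<Rightarrow> real" and U :: "nat pmf"
  assumes fU: "finite (set_pmf U)" and mean0: "measure_pmf.expectation U g = 0"
    and fI: "finite I"
  shows "measure_pmf.expectation (Pi_pmf I dflt (\<lambda>_. U)) (\<lambda>\<omega>. (\<Sum>j\<in>I. g (\<omega> j))\<^sup>2)
       = real (card I) * measure_pmf.expectation U (\<lambda>y. (g y)\<^sup>2)"
  using fI
proof (induction I rule: finite_induct)
  case empty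
  show ?case by simp
next
  case (insert x I)
  let ?Q = "Pi_pmf I dflt (\<lambda>_. U)"
  have fQ: "finite (set_pmf ?Q)" by (rule finite_set_Pi_pmf) (use insert fU in auto)
  have S0: "measure_pmf.expectation ?Q (\<lambda>\<omega>. \<Sum>j\<in>I. g (\<omega> j)) = 0"
    using insert mean0 by (subst expectation_sum_Pi_pmf) (auto intro: integrable_measure_pmf_finite fU)
  have eq: "(\<Sum>j\<in>I. g (if j = x then a else f j)) = (\<Sum>j\<in>I. g (f j))" for f a
    using insert by (intro sum.cong) auto
  have "measure_pmf.expectation (Pi_pmf (insert x I) dflt (\<lambda>_. U)) (\<lambda>\<omega>. (\<Sum>j\<in>insert x I. g (\<omega> j))\<^sup>2)
      = measure_pmf.expectation (pair_pmf U ?Q) (\<lambda>(y, f). (g y + (\<Sum>j\<in>I. g (f j)))\<^sup>2)"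
    using insert by (simp add: Pi_pmf_insert case_prod_unfold eq)
  also have "\<dots> = measure_pmf.expectation U (\<lambda>y. measure_pmf.expectation ?Q (\<lambda>f. (g y + (\<Sum>j\<in>I. g (f j)))\<^sup>2))"
    by (subst pair_iter[OF fU fQ]) simp
  also have "\<dots> = measure_pmf.expectation U (\<lambda>y. (g y)\<^sup>2 + 2 * g y * measure_pmf.expectation ?Q (\<lambda>f. \<Sum>j\<in>I. g (f j))
                 + measure_pmf.expectation ?Q (\<lambda>f. (\<Sum>j\<in>I. g (f j))\<^sup>2))"
  proof (intro Bochner_Integration.integral_cong refl)
    fix y
    have "(\<lambda>f. (g y + (\<Sum>j\<in>I. g (f j)))\<^sup>2) = (\<lambda>f. (g y)\<^sup>2 + (2 * g y) * (\<Sum>j\<in>I. g (f j)) + (\<Sum>j\<in>I. g (f j))\<^sup>2)"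
      by (simp add: power2_sum algebra_simps)
    thus "measure_pmf.expectation ?Q (\<lambda>f. (g y + (\<Sum>j\<in>I. g (f j)))\<^sup>2) =
        (g y)\<^sup>2 + 2 * g y * measure_pmf.expectation ?Q (\<lambda>f. \<Sum>j\<in>I. g (f j)) + measure_pmf.expectation ?Q (\<lambda>f. (\<Sum>j\<in>I. g (f j))\<^sup>2)"
      by (simp add: integrable_measure_pmf_finite[OF fQ])
  qed
  also have "\<dots> = measure_pmf.expectation U (\<lambda>y. (g y)\<^sup>2) + real (card I) * measure_pmf.expectation U (\<lambda>y. (g y)\<^sup>2)"
    using S0 insert.IH by (simp add: integrable_measure_pmf_finite[OF fU])
  also have "\<dots> = real (card (insert x I)) * measure_pmf.expectation U (\<lambda>y. (g y)\<^sup>2)"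
    using insert by (simp add: algebra_simps)
  finally show ?case .
qed


lemma median_count:
  fixes f :: "nat \<Rightarrow> real"
  assumes K: "K > 0" and bad: "\<bar>median K f - c\<bar> \<ge> \<gamma>"
  shows "K \<le> 2 * card {k\<in>{..<K}. \<bar>f k - c\<bar> \<ge> \<gamma>}"
proof -
  define xs where "xs = sort (map f [0..<K])"
  define P where "P = (\<lambda>v::real. \<bar>v - c\<bar> \<ge> \<gamma>)"
  have len: "length xs = K" by (simp add: xs_def)
  have srt: "sorted xs" by (simp add: xs_def)
  have cnt: "card {k\<in>{..<K}. P (f k)} = card {t. t < K \<and> P (xs ! t)}"
  proof -
    have "card {t. t < K \<and> P (xs ! t)} = length (filter P xs)"
      using length_filter_conv_card[of P xs] len by simp
    also have "\<dots> = length (filter P (map f [0..<K]))"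
      unfolding xs_def filter_sort by simp
    also have "\<dots> = card {t. t < K \<and> P (map f [0..<K] ! t)}"
      by (simp add: length_filter_conv_card)
    also have "\<dots> = card {k\<in>{..<K}. P (f k)}"
      by (intro arg_cong[where f=card]) auto
    finally show ?thesis by simp
  qed
  have sub: "card T \<le> card {k\<in>{..<K}. P (f k)}" if "T \<subseteq> {..<K}" "\<forall>t\<in>T. P (xs ! t)" for T
    unfolding cnt using that by (intro card_mono) auto
  define h where "h = K div 2"
  have med: "median K f = (if odd K then xs ! h else (xs ! (h - 1) + xs ! h) / 2)"
    unfolding median_def xs_def h_def by (simp add: Let_def)
  have hK: "h < K" using K unfolding h_def by simp
  have mono: "xs ! a \<le> xs ! b" if "a \<le> b" "b < K" for a b
    using sorted_nth_mono[OF srt that(1)] that len by simp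
  have up: "K \<le> 2 * card {k\<in>{..<K}. P (f k)}" if v: "xs ! h \<ge> c + \<gamma>"
  proof -
    have "card {h..<K} \<le> card {k\<in>{..<K}. P (f k)}"
    proof (rule sub)
      show "{h..<K} \<subseteq> {..<K}" by auto
      show "\<forall>t\<in>{h..<K}. P (xs ! t)"
      proof
        fix t assume "t \<in> {h..<K}"
        hence "xs ! h \<le> xs ! t" using mono by auto
        thus "P (xs ! t)" using v unfolding P_def by auto
      qed
    qed
    thus ?thesis unfolding h_def by simp
  qed
  have down: "K \<le> 2 * card {k\<in>{..<K}. P (f k)}" if v: "xs ! a \<le> c - \<gamma>" "a < K" "K \<le> 2 * (a + 1)" for a
  proof -
    have "card {..a} \<le> card {k\<in>{..<K}. P (f k)}"
    proof (rule sub)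
      show "{..a} \<subseteq> {..<K}" using v by auto
      show "\<forall>t\<in>{..a}. P (xs ! t)"
      proof
        fix t assume "t \<in> {..a}"
        hence "xs ! t \<le> xs ! a" using mono v by auto
        thus "P (xs ! t)" using v unfolding P_def by auto
      qed
    qed
    thus ?thesis using v by simp
  qed
  have cases: "median K f \<ge> c + \<gamma> \<or> median K f \<le> c - \<gamma>" using bad by auto
  show ?thesis
  proof (cases "odd K")
    case True
    hence m: "median K f = xs ! h" using med by simp
    from cases show ?thesis
    proof
      assume "median K f \<ge> c + \<gamma>" thus ?thesis using up m P_def by simp
    next
      assume "median K f \<le> c - \<gamma>"
      thus ?thesis using down[of h] m hK P_def True unfolding h_def by (simp add: odd_two_times_div_two_succ)
    qed
  next
    case False
    hence h1: "h \<ge> 1" using K unfolding h_def by (cases K) auto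
    have m: "median K f = (xs ! (h - 1) + xs ! h) / 2" using med False by simp
    have le: "xs ! (h - 1) \<le> xs ! h" using mono[of "h - 1" h] hK by simp
    from cases show ?thesis
    proof
      assume "median K f \<ge> c + \<gamma>"
      hence "xs ! h \<ge> c + \<gamma>" using m le by simp
      thus ?thesis using up P_def by simp
    next
      assume "median K f \<le> c - \<gamma>"
      hence "xs ! (h - 1) \<le> c - \<gamma>" using m le by simp
      thus ?thesis using down[of "h - 1"] hK h1 False P_def unfolding h_def by simp
    qed
  qed
qed

lemma block_bound:
  fixes g :: "nat \<Rightarrow> real" and U :: "nat pmf"
  assumes fU: "finite (set_pmf U)" and mean0: "measure_pmf.expectation U g = 0"
    and J: "J > 0" and \<gamma>: "\<gamma> > 0"
  shows "measure_pmf.prob (Pi_pmf {..<J} dflt (\<lambda>_. U)) {\<omega>. \<bar>(1 / real J) * (\<Sum>j<J. g (\<omega> j))\<bar> \<ge> \<gamma>}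
      \<le> measure_pmf.expectation U (\<lambda>y. (g y)\<^sup>2) / (real J * \<gamma>\<^sup>2)"
proof -
  let ?Q = "Pi_pmf {..<J} dflt (\<lambda>_. U)"
  have fQ: "finite (set_pmf ?Q)" by (rule finite_set_Pi_pmf) (use fU in auto)
  have c: "(real J * \<gamma>)\<^sup>2 > 0" using J \<gamma> by simp
  have sub: "{\<omega>. \<bar>(1 / real J) * (\<Sum>j<J. g (\<omega> j))\<bar> \<ge> \<gamma>} \<subseteq> {\<omega> \<in> space (measure_pmf ?Q). (\<Sum>j<J. g (\<omega> j))\<^sup>2 \<ge> (real J * \<gamma>)\<^sup>2}"
  proof
    fix \<omega> assume "\<omega> \<in> {\<omega>. \<bar>(1 / real J) * (\<Sum>j<J. g (\<omega> j))\<bar> \<ge> \<gamma>}"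
    hence "\<gamma> \<le> \<bar>\<Sum>j<J. g (\<omega> j)\<bar> / real J" by (simp add: abs_mult)
    hence "real J * \<gamma> \<le> \<bar>\<Sum>j<J. g (\<omega> j)\<bar>" using J by (simp add: field_simps)
    hence "(real J * \<gamma>)\<^sup>2 \<le> (\<bar>\<Sum>j<J. g (\<omega> j)\<bar>)\<^sup>2"
      using J \<gamma> by (intro power_mono) auto
    thus "\<omega> \<in> {\<omega> \<in> space (measure_pmf ?Q). (\<Sum>j<J. g (\<omega> j))\<^sup>2 \<ge> (real J * \<gamma>)\<^sup>2}" by simp
  qed
  have "measure_pmf.prob ?Q {\<omega>. \<bar>(1 / real J) * (\<Sum>j<J. g (\<omega> j))\<bar> \<ge> \<gamma>}
      \<le> measure_pmf.prob ?Q {\<omega> \<in> space (measure_pmf ?Q). (\<Sum>j<J. g (\<omega> j))\<^sup>2 \<ge> (real J * \<gamma>)\<^sup>2}"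
    by (rule measure_pmf.finite_measure_mono[OF sub]) simp
  also have "\<dots> \<le> measure_pmf.expectation ?Q (\<lambda>\<omega>. (\<Sum>j<J. g (\<omega> j))\<^sup>2) / (real J * \<gamma>)\<^sup>2"
    by (rule integral_Markov_inequality_measure[where A="{}"]) (use c in \<open>auto intro: integrable_measure_pmf_finite[OF fQ]\<close>)
  also have "\<dots> = real J * measure_pmf.expectation U (\<lambda>y. (g y)\<^sup>2) / (real J * \<gamma>)\<^sup>2"
    using var_sum_Pi[OF fU mean0, of "{..<J}" dflt] by simp
  also have "\<dots> = measure_pmf.expectation U (\<lambda>y. (g y)\<^sup>2) / (real J * \<gamma>\<^sup>2)"
    using J by (simp add: power2_eq_square field_simps)
  finally show ?thesis .
qed


definition unc :: "(nat \<Rightarrow> nat \<Rightarrow> 'a) \<Rightarrow> nat \<times> nat \<Rightarrow> 'a" where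
  "unc F = (\<lambda>(j, k). F k j)"

lemma Pi_pmf_curry:
  fixes U :: "'a pmf" and z :: 'a
  shows "Pi_pmf ({..<J} \<times> {..<K}) z (\<lambda>_. U) = map_pmf unc (Pi_pmf {..<K} (\<lambda>_. z) (\<lambda>_. Pi_pmf {..<J} z (\<lambda>_. U)))"
proof (rule pmf_eqI)
  fix \<omega> :: "nat \<times> nat \<Rightarrow> 'a"
  define F0 where "F0 = (\<lambda>k j. \<omega> (j, k))"
  have inj: "inj (unc :: (nat \<Rightarrow> nat \<Rightarrow> 'a) \<Rightarrow> _)"
  proof (rule injI)
    fix F G :: "nat \<Rightarrow> nat \<Rightarrow> 'a" assume "unc F = unc G"
    hence "(\<lambda>(j, k). F k j) = (\<lambda>(j, k). G k j)" by (simp add: unc_def)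
    hence "\<And>j k. F k j = G k j" by (metis case_prod_conv)
    thus "F = G" by (intro ext) auto
  qed
  have om: "\<omega> = unc F0" unfolding F0_def unc_def by auto
  have "pmf (map_pmf unc (Pi_pmf {..<K} (\<lambda>_. z) (\<lambda>_. Pi_pmf {..<J} z (\<lambda>_. U)))) \<omega>
     = pmf (Pi_pmf {..<K} (\<lambda>_. z) (\<lambda>_. Pi_pmf {..<J} z (\<lambda>_. U))) F0"
    by (subst om, rule pmf_map_inj'[OF inj])
  also have "\<dots> = (if \<forall>k. k \<notin> {..<K} \<longrightarrow> F0 k = (\<lambda>_. z)
        then \<Prod>k<K. (if \<forall>j. j \<notin> {..<J} \<longrightarrow> F0 k j = z then \<Prod>j<J. pmf U (F0 k j) else 0) else 0)"
    by (subst pmf_Pi, simp, intro if_cong refl prod.cong, subst pmf_Pi, simp_all)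
  also have "\<dots> = pmf (Pi_pmf ({..<J} \<times> {..<K}) z (\<lambda>_. U)) \<omega>"
  proof (cases "\<forall>x. x \<notin> {..<J} \<times> {..<K} \<longrightarrow> \<omega> x = z")
    case True
    hence c1: "\<forall>k. k \<notin> {..<K} \<longrightarrow> F0 k = (\<lambda>_. z)" and c2: "\<And>k. \<forall>j. j \<notin> {..<J} \<longrightarrow> F0 k j = z"
      unfolding F0_def by (auto simp: fun_eq_iff)
    have "(\<Prod>k<K. (if \<forall>j. j \<notin> {..<J} \<longrightarrow> F0 k j = z then \<Prod>j<J. pmf U (F0 k j) else 0))
        = (\<Prod>k<K. \<Prod>j<J. pmf U (\<omega> (j, k)))" using c2 by (simp add: F0_def)
    also have "\<dots> = (\<Prod>x\<in>{..<J} \<times> {..<K}. pmf U (\<omega> x))"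
      by (subst prod.swap) (simp add: prod.cartesian_product)
    finally show ?thesis using True c1 by (simp add: pmf_Pi)
  next
    case False
    then obtain j k where jk: "(j, k) \<notin> {..<J} \<times> {..<K}" "\<omega> (j, k) \<noteq> z" by auto
    have "(if \<forall>k. k \<notin> {..<K} \<longrightarrow> F0 k = (\<lambda>_. z)
        then \<Prod>k<K. (if \<forall>j. j \<notin> {..<J} \<longrightarrow> F0 k j = z then \<Prod>j<J. pmf U (F0 k j) else 0) else 0) = 0"
    proof (cases "k < K")
      case True
      hence "j \<ge> J" using jk by auto
      have z0: "(if \<forall>j. j \<notin> {..<J} \<longrightarrow> F0 k j = z then \<Prod>j<J. pmf U (F0 k j) else 0) = 0"
        using jk \<open>j \<ge> J\<close> unfolding F0_def by auto
      have "(\<Prod>k<K. (if \<forall>j. j \<notin> {..<J} \<longrightarrow> F0 k j = z then \<Prod>j<J. pmf U (F0 k j) else 0)) = 0"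
        apply (rule prod_zero[OF finite_lessThan])
        apply (rule bexI[of _ k])
         apply (rule z0)
        using True by simp
      thus ?thesis by simp
    next
      case False
      hence "F0 k \<noteq> (\<lambda>_. z)" using jk unfolding F0_def by (auto simp: fun_eq_iff)
      thus ?thesis using False by auto
    qed
    moreover have "pmf (Pi_pmf ({..<J} \<times> {..<K}) z (\<lambda>_. U)) \<omega> = 0"
      using False by (subst pmf_Pi) auto
    ultimately show ?thesis by simp
  qed
  finally show "pmf (Pi_pmf ({..<J} \<times> {..<K}) z (\<lambda>_. U)) \<omega> = pmf (map_pmf unc (Pi_pmf {..<K} (\<lambda>_. z) (\<lambda>_. Pi_pmf {..<J} z (\<lambda>_. U)))) \<omega>"
    by simp
qed


lemma many_bad_bound:
  fixes B :: "'a pmf" and Bad :: "'a set"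
  assumes p: "measure_pmf.prob B Bad \<le> p"
  shows "measure_pmf.prob (Pi_pmf {..<K} dflt (\<lambda>_. B)) {F. K \<le> 2 * card {k\<in>{..<K}. F k \<in> Bad}}
     \<le> real (K choose ((K + 1) div 2)) * p ^ ((K + 1) div 2)"
proof -
  define h where "h = (K + 1) div 2"
  define Sets where "Sets = {S. S \<subseteq> {..<K} \<and> card S = h}"
  define Ev where "Ev = (\<lambda>S. Pi {..<K} (\<lambda>k. if k \<in> S then Bad else UNIV))"
  let ?Q = "Pi_pmf {..<K} dflt (\<lambda>_. B)"
  have fS: "finite Sets" unfolding Sets_def by (rule finite_subset[of _ "Pow {..<K}"]) auto
  have sub: "{F. K \<le> 2 * card {k\<in>{..<K}. F k \<in> Bad}} \<subseteq> (\<Union>S\<in>Sets. Ev S)"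
  proof
    fix F assume "F \<in> {F. K \<le> 2 * card {k\<in>{..<K}. F k \<in> Bad}}"
    hence "h \<le> card {k\<in>{..<K}. F k \<in> Bad}" unfolding h_def by simp
    then obtain S where S: "S \<subseteq> {k\<in>{..<K}. F k \<in> Bad}" "card S = h" "finite S"
      by (rule obtain_subset_with_card_n)
    hence "S \<in> Sets" unfolding Sets_def by auto
    moreover have "F \<in> Ev S" using S unfolding Ev_def by auto
    ultimately show "F \<in> (\<Union>S\<in>Sets. Ev S)" by auto
  qed
  have each: "measure_pmf.prob ?Q (Ev S) \<le> p ^ h" if S: "S \<in> Sets" for S
  proof -
    have "measure_pmf.prob ?Q (Ev S) = (\<Prod>k<K. measure_pmf.prob B (if k \<in> S then Bad else UNIV))"
      unfolding Ev_def by (rule measure_Pi_pmf_Pi) simp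
    also have "\<dots> = (\<Prod>k<K. if k \<in> S then measure_pmf.prob B Bad else 1)"
      by (intro prod.cong refl) auto
    also have "\<dots> = measure_pmf.prob B Bad ^ card ({..<K} \<inter> {k. k \<in> S})"
      by (subst prod.If_cases) auto
    also have "{..<K} \<inter> {k. k \<in> S} = S" using S unfolding Sets_def by auto
    also have "measure_pmf.prob B Bad ^ card S \<le> p ^ card S"
      by (intro power_mono p) simp
    finally show ?thesis using S unfolding Sets_def by simp
  qed
  have "measure_pmf.prob ?Q {F. K \<le> 2 * card {k\<in>{..<K}. F k \<in> Bad}} \<le> measure_pmf.prob ?Q (\<Union>S\<in>Sets. Ev S)"
    by (rule measure_pmf.finite_measure_mono[OF sub]) simp
  also have "\<dots> \<le> (\<Sum>S\<in>Sets. measure_pmf.prob ?Q (Ev S))"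
    by (rule measure_pmf.finite_measure_subadditive_finite[OF fS]) simp
  also have "\<dots> \<le> (\<Sum>S\<in>Sets. p ^ h)" by (rule sum_mono[OF each])
  also have "\<dots> = real (card Sets) * p ^ h" by simp
  also have "card Sets = K choose h" unfolding Sets_def using n_subsets[of "{..<K}" h] by simp
  finally show ?thesis unfolding h_def .
qed


lemma numeric:
  fixes p \<eta> :: real and m K :: nat
  assumes p0: "0 \<le> p" and p1: "p \<le> 1 / (2 * (exp 1)\<^sup>2)" and m: "m > 0" and \<eta>: "\<eta> > 0"
    and Kb: "real K \<ge> 2 * ln (real m / \<eta>)"
  shows "real (K choose ((K + 1) div 2)) * p ^ ((K + 1) div 2) \<le> \<eta> / real m"
proof -
  define h where "h = (K + 1) div 2"
  have Kh: "K \<le> 2 * h" unfolding h_def by simp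
  have e2: "2 \<le> exp (1::real)" using exp_ge_add_one_self[of 1] by simp
  have "real (K choose h) \<le> 2 ^ K" using binomial_le_pow2[of K h] by (simp add: of_nat_le_iff[symmetric])
  also have "(2::real) ^ K \<le> 2 ^ (2 * h)" by (rule power_increasing[OF Kh]) simp
  also have "(2::real) ^ (2 * h) = 4 ^ h" by (simp add: power_mult)
  finally have c: "real (K choose h) \<le> 4 ^ h" .
  have "real (K choose h) * p ^ h \<le> 4 ^ h * p ^ h" by (intro mult_right_mono c) (simp add: p0)
  also have "\<dots> = (4 * p) ^ h" by (simp add: power_mult_distrib)
  also have "\<dots> \<le> (exp (-1)) ^ h"
  proof (rule power_mono)
    have "4 * p \<le> 2 / (exp 1)\<^sup>2" using p1 by (simp add: field_simps)
    also have "\<dots> \<le> exp 1 / (exp 1)\<^sup>2" using e2 by (intro divide_right_mono) auto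
    also have "\<dots> = exp (-1)" by (simp add: power2_eq_square exp_minus field_simps)
    finally show "4 * p \<le> exp (-1)" .
  qed (simp add: p0)
  also have "\<dots> = exp (- real h)" by (simp add: exp_of_nat_mult[symmetric])
  also have "\<dots> \<le> exp (- (real K / 2))" using Kh by simp
  also have "\<dots> \<le> exp (ln (\<eta> / real m))"
  proof -
    have "ln (real m / \<eta>) = - ln (\<eta> / real m)" using m \<eta> by (simp add: ln_div)
    thus ?thesis using Kb by simp
  qed
  also have "\<dots> = \<eta> / real m" using m \<eta> by simp
  finally show ?thesis unfolding h_def .
qed




theorem theorem2p4:
  fixes m n d L J K :: nat
    and A :: "nat \<Rightarrow> nat \<Rightarrow> real"
    and u :: "nat \<Rightarrow> nat \<Rightarrow> real"
    and x :: "nat \<Rightarrow> real"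
    and \<gamma> \<eta> :: real
  assumes "d \<ge> n"
    and "projective_2_design d L u"
    and "sqnorm n x = 1"
    and "\<gamma> > 0" and "0 < \<eta>" and "\<eta> < 1"
    and "J > 0" and "K > 0"
    and "real J \<ge> 4 * (exp 1)\<^sup>2 * (norm_2_inf m n A)\<^sup>2 / \<gamma>\<^sup>2"
    and "real K \<ge> 2 * ln (real m / \<eta>)"
  defines "P \<equiv> Pi_pmf ({..<J} \<times> {..<K}) 0 (\<lambda>_. pmf_of_set {..<L})"
    and "muhat \<equiv> (\<lambda>\<omega> i. median K (\<lambda>k. (1 / real J) * (\<Sum>j<J. y_vec n d A u x (\<omega> (j, k)) i)))"
  shows "measure_pmf.prob P
           {\<omega>. \<forall>i<m. \<bar>muhat \<omega> i - (\<Sum>j<n. A i j * x j)\<bar> < \<gamma>} \<ge> 1 - \<eta>"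
proof -
  note nd = assms(1) and design = assms(2) and xn = assms(3) and \<gamma>p = assms(4) and \<eta>p = assms(5)
    and Jp = assms(7) and Kp = assms(8) and Jb = assms(9) and Kb = assms(10)
  define U where "U = pmf_of_set {..<L}"
  have Lp: "L > 0" by (rule L_pos[OF design])
  have Une: "{..<L} \<noteq> {}" using Lp by auto
  have fU: "finite (set_pmf U)" unfolding U_def using Une by simp
  define B where "B = Pi_pmf {..<J} (0::nat) (\<lambda>_. U)"
  define Q where "Q = Pi_pmf {..<K} (\<lambda>_. 0::nat) (\<lambda>_. B)"
  have PQ: "P = map_pmf unc Q"
    unfolding P_def Q_def B_def U_def by (rule Pi_pmf_curry)
  define N where "N = norm_2_inf m n A"
  define p0 :: real where "p0 = 1 / (2 * (exp 1)\<^sup>2)"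
  define \<mu> where "\<mu> = (\<lambda>i. \<Sum>j<n. A i j * x j)"
  define Y where "Y = (\<lambda>i l. y_vec n d A u x l i)"
  define Bad where "Bad = (\<lambda>i. {f. \<bar>(1 / real J) * (\<Sum>j<J. Y i (f j)) - \<mu> i\<bar> \<ge> \<gamma>})"
  define Fail where "Fail = (\<lambda>i. {\<omega>. \<bar>muhat \<omega> i - \<mu> i\<bar> \<ge> \<gamma>})"
  have JN: "real J * \<gamma>\<^sup>2 \<ge> 4 * (exp 1)\<^sup>2 * N\<^sup>2"
    using Jb \<gamma>p unfolding N_def by (simp add: field_simps)
  have a2N: "(\<Sum>j<n. (A i j)\<^sup>2) \<le> N\<^sup>2" if i: "i < m" for i
  proof -
    have "sqrt (\<Sum>j<n. (A i j)\<^sup>2) \<le> N"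
      unfolding N_def norm_2_inf_def using i by (intro Max_ge) auto
    hence "(sqrt (\<Sum>j<n. (A i j)\<^sup>2))\<^sup>2 \<le> N\<^sup>2" by (intro power_mono) (auto intro: sum_nonneg)
    thus ?thesis by (simp add: sum_nonneg)
  qed
  have pB: "measure_pmf.prob B (Bad i) \<le> p0" if i: "i < m" for i
  proof -
    define g where "g = (\<lambda>l. Y i l - \<mu> i)"
    have mean0: "measure_pmf.expectation U g = 0"
    proof -
      have "measure_pmf.expectation U g = (\<Sum>l<L. g l) / real L"
        unfolding U_def using Une by (simp add: integral_pmf_of_set)
      also have "\<dots> = (1 / real L) * (\<Sum>l<L. Y i l) - \<mu> i"
        using Lp by (simp add: g_def sum_subtractf field_simps)
      also have "\<dots> = 0" unfolding Y_def \<mu>_def using y_mean[OF design nd] by simp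
      finally show ?thesis .
    qed
    have var: "measure_pmf.expectation U (\<lambda>y. (g y)\<^sup>2) \<le> 2 * N\<^sup>2"
    proof -
      have "measure_pmf.expectation U (\<lambda>y. (g y)\<^sup>2) = (1 / real L) * (\<Sum>l<L. (g l)\<^sup>2)"
        unfolding U_def using Une by (simp add: integral_pmf_of_set)
      also have "\<dots> \<le> 2 * (\<Sum>j<n. (A i j)\<^sup>2)"
        unfolding g_def Y_def \<mu>_def by (rule y_var[OF design nd xn])
      also have "\<dots> \<le> 2 * N\<^sup>2" using a2N[OF i] by simp
      finally show ?thesis .
    qed
    have BadEq: "Bad i = {\<omega>. \<bar>(1 / real J) * (\<Sum>j<J. g (\<omega> j))\<bar> \<ge> \<gamma>}"
    proof -
      have "(1 / real J) * (\<Sum>j<J. g (f j)) = (1 / real J) * (\<Sum>j<J. Y i (f j)) - \<mu> i" for f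
        using Jp by (simp add: g_def sum_subtractf field_simps)
      thus ?thesis unfolding Bad_def by simp
    qed
    have "measure_pmf.prob B (Bad i) \<le> measure_pmf.expectation U (\<lambda>y. (g y)\<^sup>2) / (real J * \<gamma>\<^sup>2)"
      unfolding BadEq B_def by (rule block_bound[OF fU mean0 Jp \<gamma>p])
    also have "\<dots> \<le> 2 * N\<^sup>2 / (real J * \<gamma>\<^sup>2)"
      using var Jp \<gamma>p by (intro divide_right_mono) auto
    also have "\<dots> \<le> p0"
    proof -
      have pos: "real J * \<gamma>\<^sup>2 > 0" using Jp \<gamma>p by simp
      have "2 * N\<^sup>2 * (2 * (exp 1)\<^sup>2) \<le> real J * \<gamma>\<^sup>2" using JN by (simp add: algebra_simps)
      thus ?thesis unfolding p0_def using pos by (simp add: field_simps)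
    qed
    finally show ?thesis .
  qed
  have failQ: "measure_pmf.prob P (Fail i) \<le> \<eta> / real m" if i: "i < m" for i
  proof -
    have "measure_pmf.prob P (Fail i) = measure_pmf.prob Q (unc -` Fail i)" by (simp add: PQ)
    also have "\<dots> \<le> measure_pmf.prob Q {F. K \<le> 2 * card {k\<in>{..<K}. F k \<in> Bad i}}"
    proof (rule measure_pmf.finite_measure_mono)
      show "unc -` Fail i \<subseteq> {F. K \<le> 2 * card {k\<in>{..<K}. F k \<in> Bad i}}"
      proof
        fix F assume "F \<in> unc -` Fail i"
        hence "\<bar>median K (\<lambda>k. (1 / real J) * (\<Sum>j<J. Y i (F k j))) - \<mu> i\<bar> \<ge> \<gamma>"
          unfolding Fail_def muhat_def unc_def Y_def by simp
        from median_count[OF Kp this] show "F \<in> {F. K \<le> 2 * card {k\<in>{..<K}. F k \<in> Bad i}}"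
          unfolding Bad_def by simp
      qed
    qed simp
    also have "\<dots> \<le> real (K choose ((K + 1) div 2)) * p0 ^ ((K + 1) div 2)"
      unfolding Q_def by (rule many_bad_bound[OF pB[OF i]])
    also have "\<dots> \<le> \<eta> / real m"
      by (rule numeric) (use i \<eta>p Kb in \<open>auto simp: p0_def\<close>)
    finally show ?thesis .
  qed
  have comp: "{\<omega>. \<forall>i<m. \<bar>muhat \<omega> i - (\<Sum>j<n. A i j * x j)\<bar> < \<gamma>} = UNIV - (\<Union>i\<in>{..<m}. Fail i)"
    unfolding Fail_def \<mu>_def by auto
  have "measure_pmf.prob P (\<Union>i\<in>{..<m}. Fail i) \<le> (\<Sum>i<m. measure_pmf.prob P (Fail i))"
    by (rule measure_pmf.finite_measure_subadditive_finite) auto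
  also have "\<dots> \<le> (\<Sum>i<m. \<eta> / real m)" by (rule sum_mono) (use failQ in auto)
  also have "\<dots> \<le> \<eta>" using \<eta>p by (cases "m = 0") auto
  finally have "measure_pmf.prob P (\<Union>i\<in>{..<m}. Fail i) \<le> \<eta>" .
  moreover have "measure_pmf.prob P (UNIV - (\<Union>i\<in>{..<m}. Fail i)) = 1 - measure_pmf.prob P (\<Union>i\<in>{..<m}. Fail i)"
    by (subst measure_pmf.prob_compl[symmetric]) (auto simp: Compl_eq_Diff_UNIV)
  ultimately show ?thesis unfolding comp by simp
qed


end
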